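(* If an $A_\infty$-algebra $(A,m_\bullet)$ in a monoidal DG category $\mathcal{A}$ is strongly homotopy unital, then it is H-unital, i.e. its non-augmented bar construction $B^{na}_\infty(A)$ is null-homotopic in the DG category of (bounded above) twisted complexes over $\mathcal{A}$.
   Context: Conventions: monoidal product by juxtaposition, unit object $\mathbb{1}$ (unitors suppressed, so $\mathbb{1}A=A$); juxtaposing a morphism with an object means tensoring with its identity; $\mathrm{id}^j=\mathrm{id}_A^{\otimes j}$. Infinite sums in an ambient DG category containing $\mathcal{A}$ as full monoidal subcategory (e.g. $\mathrm{Mod}\text{-}\mathcal{A}$). Twisted complexes: families $(a_i)_{i\in\mathbb{Z}}$, $\alpha_{ij}\colon a_i\to a_j$ of degree $i-j+1$, $\sum\alpha_{ij}$ an endomorphism of $\bigoplus a_i[-i]$, $(-1)^jd\alpha_{ij}+\sum_k\alpha_{kj}\alpha_{ik}=0$; Hom complexes $\mathrm{Hom}(\bigoplus a_k[-k],\bigoplus b_l[-l])$ with component $f\in\mathrm{Hom}^q(a_k,b_l)$ of degree $q+l-k$ and $df=(-1)^ldf+\sum_m(\beta_{lm}f-(-1)^{q+l-k}f\alpha_{mk})$. $A_\infty$-algebra $(A,m_\bullet)$: $m_i\colon A^i\to A$ of degree $2-i$, $i\ge2$, with $B^{na}_\infty(A)$ (object $A^n$ in degree $1-n$, $n\ge1$; twisted differentials $A^{i+k}\to A^i$ equal to $(-1)^{(i-1)(k+1)}\sum_{j=0}^{i-1}(-1)^{jk}\mathrm{id}^{i-j-1}\otimes m_{k+1}\otimes\mathrm{id}^j$)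 a twisted complex. Right modules and $\mathrm{Nod}_\infty\text{-}A$: objects $(E,p_\bullet)$, $p_i\colon EA^{i-1}\to E$ of degree $2-i$, with bar construction (objects $EA^n$ in degree $-n$; twisted differentials $EA^{i+k-1}\to EA^{i-1}$ equal to $(-1)^{(i-1)(k+1)}(\sum_{j=0}^{i-2}(-1)^{jk}\mathrm{id}^{i-j-1}\otimes m_{k+1}\otimes\mathrm{id}^j+(-1)^{(i-1)k}p_{k+1}\otimes\mathrm{id}^{i-1})$) a twisted complex; degree $n$ morphisms $f_i\colon EA^{i-1}\to F$ of degree $n-i+1$ with bar construction components $EA^{i+k-1}\to FA^{i-1}$ equal to $(-1)^{n(i-1)}f_{k+1}\otimes\mathrm{id}^{i-1}$; differential and composition computed on bar constructions. Left modules and $A\text{-}\mathrm{Nod}_\infty$ symmetrically: $p_i\colon A^{i-1}E\to E$, twisted differentials $A^{i+k-1}E\to A^{i-1}E$ equal to $(-1)^{(i-1)(k+1)}(\sum_{j=1}^{i-1}(-1)^{jk}\mathrm{id}^{i-j-1}\otimes m_{k+1}\otimes\mathrm{id}^j+\mathrm{id}^{i-1}\otimes p_{k+1})$, morphism bar components $A^{i+k-1}E\to A^{i-1}F$ equal to $(-1)^{(n+k)(i-1)}\mathrm{id}^{i-1}\otimes f_{k+1}$. Free right module on $E$: $(EA,\mathrm{id}_E\otimes m_\bullet)$; similarly free left modules. $\mu_2\colon A^2\to A$ in $\mathrm{Nod}_\infty\text{-}A$ is the morphism of right modules (from the free module $A\cdot A$) with components $(\mu_2)_j=(-1)^{j-1}m_{j+1}\colon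 A^2A^{j-1}\to A$; in $A\text{-}\mathrm{Nod}_\infty$, $\mu_2$ has components $m_{j+1}\colon A^{j-1}A^2\to A$. Strongly homotopy unital: there exist a closed degree $0$ morphism $\eta\colon\mathbb{1}\to A$ in $\mathcal{A}$, a degree $-1$ endomorphism $h^r_\bullet$ of $A$ in $\mathrm{Nod}_\infty\text{-}A$ and a degree $-1$ endomorphism $h^l_\bullet$ of $A$ in $A\text{-}\mathrm{Nod}_\infty$ with $\mu_2\circ\eta A=\mathrm{id}_A+dh^r_\bullet$ in $\mathrm{Nod}_\infty\text{-}A$ and $\mu_2\circ A\eta=\mathrm{id}_A+dh^l_\bullet$ in $A\text{-}\mathrm{Nod}_\infty$, where $\eta A$ (resp. $A\eta$) is the strict morphism $A\to A^2$ with first component $\eta\otimes\mathrm{id}_A$ (resp. $\mathrm{id}_A\otimes\eta$) and zero higher components. *)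

theory Defs
  imports Main
begin

section \<open>Strict monoidal DG categories (Z-linear), given by an untyped morphism carrier\<close>

text \<open>Morphisms live in a common type 'm; hom C a b n is the set of degree-n morphisms a to b.
  Composition cmp C g f means g after f.  Tensor of objects tens, of morphisms tensm.\<close>

record ('o, 'm) mdg =
  hom   :: "'o \<Rightarrow> 'o \<Rightarrow> int \<Rightarrow> 'm set"
  cmp   :: "'m \<Rightarrow> 'm \<Rightarrow> 'm"
  ident :: "'o \<Rightarrow> 'm"
  dif   :: "'m \<Rightarrow> 'm"
  tens  :: "'o \<Rightarrow> 'o \<Rightarrow> 'o"
  tunit :: "'o"
  tensm :: "'m \<Rightarrow> 'm \<Rightarrow> 'm"

definition neg1 :: "int \<Rightarrow> 'm::uminus \<Rightarrow> 'm" where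
  "neg1 n x = (if even n then x else - x)"

definition monoidal_dg :: "('o, 'm::ab_group_add) mdg \<Rightarrow> bool" where
  "monoidal_dg C \<longleftrightarrow>
    (\<forall>a b n. 0 \<in> hom C a b n
       \<and> (\<forall>f\<in>hom C a b n. \<forall>g\<in>hom C a b n. f + g \<in> hom C a b n)
       \<and> (\<forall>f\<in>hom C a b n. - f \<in> hom C a b n)) \<and>
    (\<forall>a b c p q. \<forall>g\<in>hom C b c p. \<forall>f\<in>hom C a b q. cmp C g f \<in> hom C a c (p + q)) \<and>
    (\<forall>a b c e p q r. \<forall>h\<in>hom C c e p. \<forall>g\<in>hom C b c q. \<forall>f\<in>hom C a b r.
       cmp C h (cmp C g f) = cmp C (cmp C h g) f) \<and>
    (\<forall>a. ident C a \<in> hom C a a 0) \<and>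
    (\<forall>a b n. \<forall>f\<in>hom C a b n. cmp C (ident C b) f = f \<and> cmp C f (ident C a) = f) \<and>
    (\<forall>a b c p q. \<forall>g\<in>hom C b c p. \<forall>g'\<in>hom C b c p. \<forall>f\<in>hom C a b q. \<forall>f'\<in>hom C a b q.
       cmp C (g + g') f = cmp C g f + cmp C g' f \<and> cmp C g (f + f') = cmp C g f + cmp C g f') \<and>
    (\<forall>a b n. \<forall>f\<in>hom C a b n. dif C f \<in> hom C a b (n + 1) \<and> dif C (dif C f) = 0) \<and>
    (\<forall>a b n. \<forall>f\<in>hom C a b n. \<forall>g\<in>hom C a b n. dif C (f + g) = dif C f + dif C g) \<and>
    (\<forall>a. dif C (ident C a) = 0) \<and>
    (\<forall>a b c p q. \<forall>g\<in>hom C b c p. \<forall>f\<in>hom C a b q.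
       dif C (cmp C g f) = cmp C (dif C g) f + neg1 p (cmp C g (dif C f))) \<and>
    (\<forall>a b c. tens C (tens C a b) c = tens C a (tens C b c)) \<and>
    (\<forall>a. tens C (tunit C) a = a \<and> tens C a (tunit C) = a) \<and>
    (\<forall>a b c d p q. \<forall>f\<in>hom C a b p. \<forall>g\<in>hom C c d q.
       tensm C f g \<in> hom C (tens C a c) (tens C b d) (p + q)) \<and>
    (\<forall>a b c d e g p q r. \<forall>f1\<in>hom C a b p. \<forall>f2\<in>hom C c d q. \<forall>f3\<in>hom C e g r.
       tensm C (tensm C f1 f2) f3 = tensm C f1 (tensm C f2 f3)) \<and>
    (\<forall>a b n. \<forall>f\<in>hom C a b n.
       tensm C (ident C (tunit C)) f = f \<and> tensm C f (ident C (tunit C)) = f) \<and>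
    (\<forall>a b. tensm C (ident C a) (ident C b) = ident C (tens C a b)) \<and>
    (\<forall>a b c d p q. \<forall>f\<in>hom C a b p. \<forall>f'\<in>hom C a b p. \<forall>g\<in>hom C c d q. \<forall>g'\<in>hom C c d q.
       tensm C (f + f') g = tensm C f g + tensm C f' g \<and> tensm C f (g + g') = tensm C f g + tensm C f g') \<and>
    (\<forall>a a' b c c' d p q r s. \<forall>f\<in>hom C a b p. \<forall>g\<in>hom C c d q. \<forall>f'\<in>hom C a' a r. \<forall>g'\<in>hom C c' c s.
       cmp C (tensm C f g) (tensm C f' g') = neg1 (q * r) (tensm C (cmp C f f') (cmp C g g'))) \<and>
    (\<forall>a b c d p q. \<forall>f\<in>hom C a b p. \<forall>g\<in>hom C c d q.
       dif C (tensm C f g) = tensm C (dif C f) g + neg1 p (tensm C f (dif C g)))"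

primrec opow :: "('o, 'm) mdg \<Rightarrow> 'o \<Rightarrow> nat \<Rightarrow> 'o" where
  "opow C A 0 = tunit C"
| "opow C A (Suc n) = tens C A (opow C A n)"

definition idp :: "('o, 'm) mdg \<Rightarrow> 'o \<Rightarrow> nat \<Rightarrow> 'm" where
  "idp C A n = ident C (opow C A n)"

section \<open>Twisted complexes (matrices indexed by positions in an index set I)\<close>

definition fsum :: "('i \<Rightarrow> 'm::comm_monoid_add) \<Rightarrow> 'm" where
  "fsum g = sum g {x. g x \<noteq> 0}"

text \<open>A morphism of total degree n: component k to l lies in Hom^(n+k-l)(a k, b l); row-finite
  (maps out of a summand land in finitely many summands of the target sum).\<close>
definition tw_mor :: "('o, 'm::zero) mdg \<Rightarrow> int set \<Rightarrow> int set \<Rightarrow> (int \<Rightarrow> 'o) \<Rightarrow> (int \<Rightarrow> 'o)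
    \<Rightarrow> int \<Rightarrow> (int \<Rightarrow> int \<Rightarrow> 'm) \<Rightarrow> bool" where
  "tw_mor C I J a b n f \<longleftrightarrow>
     (\<forall>k l. if k \<in> I \<and> l \<in> J then f k l \<in> hom C (a k) (b l) (n + k - l) else f k l = 0) \<and>
     (\<forall>k. finite {l. f k l \<noteq> 0})"

definition tw_comp :: "('o, 'm::ab_group_add) mdg \<Rightarrow> (int \<Rightarrow> int \<Rightarrow> 'm) \<Rightarrow> (int \<Rightarrow> int \<Rightarrow> 'm)
    \<Rightarrow> int \<Rightarrow> int \<Rightarrow> 'm" where
  "tw_comp C g f = (\<lambda>k l. fsum (\<lambda>m. cmp C (g m l) (f k m)))"

definition tw_d :: "('o, 'm::ab_group_add) mdg \<Rightarrow> (int \<Rightarrow> int \<Rightarrow> 'm) \<Rightarrow> (int \<Rightarrow> int \<Rightarrow> 'm)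
    \<Rightarrow> int \<Rightarrow> (int \<Rightarrow> int \<Rightarrow> 'm) \<Rightarrow> int \<Rightarrow> int \<Rightarrow> 'm" where
  "tw_d C \<alpha> \<beta> n f = (\<lambda>k l. neg1 l (dif C (f k l)) + fsum (\<lambda>m. cmp C (\<beta> m l) (f k m))
                          - neg1 n (fsum (\<lambda>m. cmp C (f m l) (\<alpha> k m))))"

definition tw_id :: "('o, 'm::zero) mdg \<Rightarrow> int set \<Rightarrow> (int \<Rightarrow> 'o) \<Rightarrow> int \<Rightarrow> int \<Rightarrow> 'm" where
  "tw_id C I a = (\<lambda>k l. if k = l \<and> k \<in> I then ident C (a k) else 0)"

definition tw_complex :: "('o, 'm::ab_group_add) mdg \<Rightarrow> int set \<Rightarrow> (int \<Rightarrow> 'o)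
    \<Rightarrow> (int \<Rightarrow> int \<Rightarrow> 'm) \<Rightarrow> bool" where
  "tw_complex C I a \<alpha> \<longleftrightarrow> tw_mor C I I a a 1 \<alpha> \<and>
     (\<forall>i\<in>I. \<forall>j\<in>I. neg1 j (dif C (\<alpha> i j)) + fsum (\<lambda>k. cmp C (\<alpha> k j) (\<alpha> i k)) = 0)"

definition tw_null_homotopic :: "('o, 'm::ab_group_add) mdg \<Rightarrow> int set \<Rightarrow> (int \<Rightarrow> 'o)
    \<Rightarrow> (int \<Rightarrow> int \<Rightarrow> 'm) \<Rightarrow> bool" where
  "tw_null_homotopic C I a \<alpha> \<longleftrightarrow>
     (\<exists>H. tw_mor C I I a a (-1) H \<and> tw_d C \<alpha> \<alpha> (-1) H = tw_id C I a)"

section \<open>A-infinity algebras and the non-augmented bar construction\<close>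

text \<open>Position p \<le> 0 carries A^(1-p) (degree 1-n for A^n).  Differential from A^(i+k)
  (position 1-i-k) to A^i (position 1-i).\<close>
definition bar_obj :: "('o, 'm) mdg \<Rightarrow> 'o \<Rightarrow> int \<Rightarrow> 'o" where
  "bar_obj C A = (\<lambda>p. opow C A (nat (1 - p)))"

definition bar_alg :: "('o, 'm::ab_group_add) mdg \<Rightarrow> 'o \<Rightarrow> (nat \<Rightarrow> 'm) \<Rightarrow> int \<Rightarrow> int \<Rightarrow> 'm" where
  "bar_alg C A m = (\<lambda>p q. if p < q \<and> q \<le> 0 then
      (let i = nat (1 - q); k = nat (q - p) in
        neg1 (int ((i - 1) * (k + 1)))
          (\<Sum>j<i. neg1 (int (j * k)) (tensm C (idp C A (i - j - 1)) (tensm C (m (k + 1)) (idp C A j)))))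
      else 0)"

definition ainf_alg :: "('o, 'm::ab_group_add) mdg \<Rightarrow> 'o \<Rightarrow> (nat \<Rightarrow> 'm) \<Rightarrow> bool" where
  "ainf_alg C A m \<longleftrightarrow> (\<forall>i\<ge>2. m i \<in> hom C (opow C A i) A (2 - int i)) \<and>
     tw_complex C {p. p \<le> 0} (bar_obj C A) (bar_alg C A m)"

section \<open>Right and left A-infinity modules (Nod_\<infinity>-A, A-Nod_\<infinity>)\<close>

text \<open>Bar construction of a right module (E,pE): position p \<le> 0 carries E A^(-p);
  differential from E A^(i+k-1) to E A^(i-1).\<close>
definition rmod_bar :: "('o, 'm::ab_group_add) mdg \<Rightarrow> 'o \<Rightarrow> (nat \<Rightarrow> 'm) \<Rightarrow> 'o \<Rightarrow> (nat \<Rightarrow> 'm)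
    \<Rightarrow> int \<Rightarrow> int \<Rightarrow> 'm" where
  "rmod_bar C A m E pE = (\<lambda>p q. if p < q \<and> q \<le> 0 then
      (let i = nat (1 - q); k = nat (q - p) in
        neg1 (int ((i - 1) * (k + 1)))
          ((\<Sum>j<i - 1. neg1 (int (j * k))
              (tensm C (tensm C (ident C E) (idp C A (i - j - 2))) (tensm C (m (k + 1)) (idp C A j))))
           + neg1 (int ((i - 1) * k)) (tensm C (pE (k + 1)) (idp C A (i - 1)))))
      else 0)"

text \<open>Bar construction of a degree-n right module morphism: E A^(i+k-1) to F A^(i-1).\<close>
definition rbar :: "('o, 'm::ab_group_add) mdg \<Rightarrow> 'o \<Rightarrow> int \<Rightarrow> (nat \<Rightarrow> 'm) \<Rightarrow> int \<Rightarrow> int \<Rightarrow> 'm" where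
  "rbar C A n f = (\<lambda>p q. if p \<le> q \<and> q \<le> 0 then
      (let i = nat (1 - q); k = nat (q - p) in
        neg1 (n * int (i - 1)) (tensm C (f (k + 1)) (idp C A (i - 1))))
      else 0)"

definition lmod_bar :: "('o, 'm::ab_group_add) mdg \<Rightarrow> 'o \<Rightarrow> (nat \<Rightarrow> 'm) \<Rightarrow> 'o \<Rightarrow> (nat \<Rightarrow> 'm)
    \<Rightarrow> int \<Rightarrow> int \<Rightarrow> 'm" where
  "lmod_bar C A m E pE = (\<lambda>p q. if p < q \<and> q \<le> 0 then
      (let i = nat (1 - q); k = nat (q - p) in
        neg1 (int ((i - 1) * (k + 1)))
          ((\<Sum>j\<in>{1..<i}. neg1 (int (j * k))
              (tensm C (idp C A (i - j - 1)) (tensm C (m (k + 1)) (tensm C (idp C A (j - 1)) (ident C E)))))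
           + tensm C (idp C A (i - 1)) (pE (k + 1))))
      else 0)"

definition lbar :: "('o, 'm::ab_group_add) mdg \<Rightarrow> 'o \<Rightarrow> int \<Rightarrow> (nat \<Rightarrow> 'm) \<Rightarrow> int \<Rightarrow> int \<Rightarrow> 'm" where
  "lbar C A n f = (\<lambda>p q. if p \<le> q \<and> q \<le> 0 then
      (let i = nat (1 - q); k = nat (q - p) in
        neg1 ((n + int k) * int (i - 1)) (tensm C (idp C A (i - 1)) (f (k + 1))))
      else 0)"

definition rmod_mor :: "('o, 'm) mdg \<Rightarrow> 'o \<Rightarrow> 'o \<Rightarrow> 'o \<Rightarrow> int \<Rightarrow> (nat \<Rightarrow> 'm) \<Rightarrow> bool" where
  "rmod_mor C A E F n f \<longleftrightarrow>
     (\<forall>i\<ge>1. f i \<in> hom C (tens C E (opow C A (i - 1))) F (n - int i + 1))"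

definition lmod_mor :: "('o, 'm) mdg \<Rightarrow> 'o \<Rightarrow> 'o \<Rightarrow> 'o \<Rightarrow> int \<Rightarrow> (nat \<Rightarrow> 'm) \<Rightarrow> bool" where
  "lmod_mor C A E F n f \<longleftrightarrow>
     (\<forall>i\<ge>1. f i \<in> hom C (tens C (opow C A (i - 1)) E) F (n - int i + 1))"

text \<open>Differential and composition computed on bar constructions: the i-th component is the
  component from position 1-i (E A^(i-1)) to position 0 (F).\<close>
definition rmod_dif :: "('o, 'm::ab_group_add) mdg \<Rightarrow> 'o \<Rightarrow> (nat \<Rightarrow> 'm) \<Rightarrow> 'o \<Rightarrow> (nat \<Rightarrow> 'm)
    \<Rightarrow> 'o \<Rightarrow> (nat \<Rightarrow> 'm) \<Rightarrow> int \<Rightarrow> (nat \<Rightarrow> 'm) \<Rightarrow> nat \<Rightarrow> 'm" where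
  "rmod_dif C A m E pE F pF n f = (\<lambda>i. if 1 \<le> i then
      tw_d C (rmod_bar C A m E pE) (rmod_bar C A m F pF) n (rbar C A n f) (1 - int i) 0 else 0)"

definition rmod_cmp :: "('o, 'm::ab_group_add) mdg \<Rightarrow> 'o \<Rightarrow> int \<Rightarrow> (nat \<Rightarrow> 'm) \<Rightarrow> int \<Rightarrow> (nat \<Rightarrow> 'm)
    \<Rightarrow> nat \<Rightarrow> 'm" where
  "rmod_cmp C A ng g nf f = (\<lambda>i. if 1 \<le> i then
      tw_comp C (rbar C A ng g) (rbar C A nf f) (1 - int i) 0 else 0)"

definition lmod_dif :: "('o, 'm::ab_group_add) mdg \<Rightarrow> 'o \<Rightarrow> (nat \<Rightarrow> 'm) \<Rightarrow> 'o \<Rightarrow> (nat \<Rightarrow> 'm)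
    \<Rightarrow> 'o \<Rightarrow> (nat \<Rightarrow> 'm) \<Rightarrow> int \<Rightarrow> (nat \<Rightarrow> 'm) \<Rightarrow> nat \<Rightarrow> 'm" where
  "lmod_dif C A m E pE F pF n f = (\<lambda>i. if 1 \<le> i then
      tw_d C (lmod_bar C A m E pE) (lmod_bar C A m F pF) n (lbar C A n f) (1 - int i) 0 else 0)"

definition lmod_cmp :: "('o, 'm::ab_group_add) mdg \<Rightarrow> 'o \<Rightarrow> int \<Rightarrow> (nat \<Rightarrow> 'm) \<Rightarrow> int \<Rightarrow> (nat \<Rightarrow> 'm)
    \<Rightarrow> nat \<Rightarrow> 'm" where
  "lmod_cmp C A ng g nf f = (\<lambda>i. if 1 \<le> i then
      tw_comp C (lbar C A ng g) (lbar C A nf f) (1 - int i) 0 else 0)"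

section \<open>Strong homotopy unitality\<close>

definition mod_id :: "('o, 'm::zero) mdg \<Rightarrow> 'o \<Rightarrow> nat \<Rightarrow> 'm" where
  "mod_id C A = (\<lambda>i. if i = 1 then ident C A else 0)"

text \<open>mu_2 as a right module morphism A.A \<rightarrow> A: components (-1)^(j-1) m_(j+1).\<close>
definition rmu2 :: "(nat \<Rightarrow> 'm::{uminus,zero}) \<Rightarrow> nat \<Rightarrow> 'm" where
  "rmu2 m = (\<lambda>j. if 1 \<le> j then neg1 (int j - 1) (m (j + 1)) else 0)"

definition lmu2 :: "(nat \<Rightarrow> 'm::zero) \<Rightarrow> nat \<Rightarrow> 'm" where
  "lmu2 m = (\<lambda>j. if 1 \<le> j then m (j + 1) else 0)"

definition reta :: "('o, 'm::zero) mdg \<Rightarrow> 'o \<Rightarrow> 'm \<Rightarrow> nat \<Rightarrow> 'm" where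
  "reta C A \<eta> = (\<lambda>j. if j = 1 then tensm C \<eta> (ident C A) else 0)"

definition leta :: "('o, 'm::zero) mdg \<Rightarrow> 'o \<Rightarrow> 'm \<Rightarrow> nat \<Rightarrow> 'm" where
  "leta C A \<eta> = (\<lambda>j. if j = 1 then tensm C (ident C A) \<eta> else 0)"

definition strongly_homotopy_unital :: "('o, 'm::ab_group_add) mdg \<Rightarrow> 'o \<Rightarrow> (nat \<Rightarrow> 'm) \<Rightarrow> bool" where
  "strongly_homotopy_unital C A m \<longleftrightarrow>
     (\<exists>\<eta> hr hl. \<eta> \<in> hom C (tunit C) A 0 \<and> dif C \<eta> = 0 \<and>
        rmod_mor C A A A (-1) hr \<and> lmod_mor C A A A (-1) hl \<and>
        rmod_cmp C A 0 (rmu2 m) 0 (reta C A \<eta>) = (\<lambda>i. mod_id C A i + rmod_dif C A m A m A m (-1) hr i) \<and>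
        lmod_cmp C A 0 (lmu2 m) 0 (leta C A \<eta>) = (\<lambda>i. mod_id C A i + lmod_dif C A m A m A m (-1) hl i))"

end

theory Submission
  imports Defs
begin


lemma neg1_simps[simp]:
  "neg1 n (0::'m::ab_group_add) = 0"
  "neg1 a (neg1 b (x::'m::ab_group_add)) = neg1 (a+b) x"
  "neg1 n (x + y) = neg1 n x + neg1 n (y::'m::ab_group_add)"
  "neg1 n (- x) = - neg1 n (x::'m::ab_group_add)"
  "neg1 n (x - y) = neg1 n x - neg1 n (y::'m::ab_group_add)"
  by (auto simp: neg1_def)

lemma neg1_even[simp]: "even n \<Longrightarrow> neg1 n x = x" by (simp add: neg1_def)
lemma neg1_odd[simp]: "odd n \<Longrightarrow> neg1 n x = - x" by (simp add: neg1_def)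
lemma neg1_cong: "even (a - b) \<Longrightarrow> neg1 a x = neg1 b x"
  by (auto simp: neg1_def)
lemma neg1_sum: "neg1 n (sum f S) = sum (\<lambda>x. neg1 n (f x)) (S::'a set)" for f :: "'a \<Rightarrow> 'm::ab_group_add"
  by (auto simp: neg1_def sum_negf)

lemma fsum_eq_sum:
  assumes "finite S" "\<And>x. x \<notin> S \<Longrightarrow> g x = 0"
  shows "fsum g = sum g S"
proof -
  have "{x. g x \<noteq> 0} \<subseteq> S" using assms(2) by blast
  then show ?thesis unfolding fsum_def
    by (intro sum.mono_neutral_left) (auto simp: assms(1))
qed

locale L =
  fixes C :: "('o, 'm::ab_group_add) mdg" and A :: 'o
  assumes M: "monoidal_dg C"
begin

lemmas Ms = M[unfolded monoidal_dg_def]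

abbreviation Ao where "Ao n \<equiv> opow C A n"
abbreviation I where "I n \<equiv> idp C A n"
abbreviation T where "T \<equiv> tensm C"
abbreviation cp where "cp \<equiv> cmp C"
abbreviation df where "df \<equiv> dif C"

definition ty :: "'m \<Rightarrow> nat \<Rightarrow> nat \<Rightarrow> int \<Rightarrow> bool" where
  "ty f a b d \<longleftrightarrow> f \<in> hom C (Ao a) (Ao b) d"

lemma ax_zero: "0 \<in> hom C a b n" using Ms[THEN conjunct1] by blast
lemma ax_add: "f \<in> hom C a b n \<Longrightarrow> g \<in> hom C a b n \<Longrightarrow> f + g \<in> hom C a b n"
  using Ms[THEN conjunct1] by blast
lemma ax_uminus: "f \<in> hom C a b n \<Longrightarrow> - f \<in> hom C a b n"
  using Ms[THEN conjunct1] by blast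
lemma ax_cmp: "g \<in> hom C b c p \<Longrightarrow> f \<in> hom C a b q \<Longrightarrow> cp g f \<in> hom C a c (p + q)"
  using Ms[THEN conjunct2, THEN conjunct1] by blast
lemma ax_assoc: "h \<in> hom C c e p \<Longrightarrow> g \<in> hom C b c q \<Longrightarrow> f \<in> hom C a b r \<Longrightarrow>
       cp h (cp g f) = cp (cp h g) f"
  using Ms[THEN conjunct2, THEN conjunct2, THEN conjunct1] by blast
lemma ax_ident: "ident C a \<in> hom C a a 0" using Ms[THEN conjunct2, THEN conjunct2, THEN conjunct2, THEN conjunct1] by blast
lemma ax_idl: "f \<in> hom C a b n \<Longrightarrow> cp (ident C b) f = f"
  using Ms[THEN conjunct2, THEN conjunct2, THEN conjunct2, THEN conjunct2, THEN conjunct1] by blast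
lemma ax_idr: "f \<in> hom C a b n \<Longrightarrow> cp f (ident C a) = f"
  using Ms[THEN conjunct2, THEN conjunct2, THEN conjunct2, THEN conjunct2, THEN conjunct1] by blast
lemma ax_distl: "g \<in> hom C b c p \<Longrightarrow> g' \<in> hom C b c p \<Longrightarrow> f \<in> hom C a b q \<Longrightarrow>
   cp (g + g') f = cp g f + cp g' f"
  using Ms[THEN conjunct2, THEN conjunct2, THEN conjunct2, THEN conjunct2, THEN conjunct2, THEN conjunct1] by blast
lemma ax_distr: "g \<in> hom C b c p \<Longrightarrow> f \<in> hom C a b q \<Longrightarrow> f' \<in> hom C a b q \<Longrightarrow>
   cp g (f + f') = cp g f + cp g f'"
  using Ms[THEN conjunct2, THEN conjunct2, THEN conjunct2, THEN conjunct2, THEN conjunct2, THEN conjunct1] by blast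
lemma ax_dif: "f \<in> hom C a b n \<Longrightarrow> df f \<in> hom C a b (n + 1)"
  using Ms[THEN conjunct2, THEN conjunct2, THEN conjunct2, THEN conjunct2, THEN conjunct2, THEN conjunct2, THEN conjunct1] by blast
lemma ax_difadd: "f \<in> hom C a b n \<Longrightarrow> g \<in> hom C a b n \<Longrightarrow> df (f + g) = df f + df g"
  using Ms[THEN conjunct2, THEN conjunct2, THEN conjunct2, THEN conjunct2, THEN conjunct2, THEN conjunct2, THEN conjunct2, THEN conjunct1] by blast
lemma ax_difid: "df (ident C a) = 0"
  using Ms[THEN conjunct2, THEN conjunct2, THEN conjunct2, THEN conjunct2, THEN conjunct2, THEN conjunct2, THEN conjunct2, THEN conjunct2, THEN conjunct1] by blast
lemma ax_tassoc: "tens C (tens C a b) c = tens C a (tens C b c)"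
  using Ms[THEN conjunct2, THEN conjunct2, THEN conjunct2, THEN conjunct2, THEN conjunct2, THEN conjunct2, THEN conjunct2, THEN conjunct2, THEN conjunct2, THEN conjunct2, THEN conjunct1] by blast
lemma ax_tunit: "tens C (tunit C) a = a" "tens C a (tunit C) = a"
  using Ms[THEN conjunct2, THEN conjunct2, THEN conjunct2, THEN conjunct2, THEN conjunct2, THEN conjunct2, THEN conjunct2, THEN conjunct2, THEN conjunct2, THEN conjunct2, THEN conjunct2, THEN conjunct1] by blast+
lemma ax_tm: "f \<in> hom C a b p \<Longrightarrow> g \<in> hom C c d q \<Longrightarrow> T f g \<in> hom C (tens C a c) (tens C b d) (p + q)"
  using Ms[THEN conjunct2, THEN conjunct2, THEN conjunct2, THEN conjunct2, THEN conjunct2, THEN conjunct2, THEN conjunct2, THEN conjunct2, THEN conjunct2, THEN conjunct2, THEN conjunct2, THEN conjunct2, THEN conjunct1] by blast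
lemma ax_tmassoc: "f1 \<in> hom C a b p \<Longrightarrow> f2 \<in> hom C c d q \<Longrightarrow> f3 \<in> hom C e g r \<Longrightarrow>
    T (T f1 f2) f3 = T f1 (T f2 f3)"
  using Ms[THEN conjunct2, THEN conjunct2, THEN conjunct2, THEN conjunct2, THEN conjunct2, THEN conjunct2, THEN conjunct2, THEN conjunct2, THEN conjunct2, THEN conjunct2, THEN conjunct2, THEN conjunct2, THEN conjunct2, THEN conjunct1] by blast
lemma ax_tmunit: "f \<in> hom C a b n \<Longrightarrow> T (ident C (tunit C)) f = f \<and> T f (ident C (tunit C)) = f"
  using Ms[THEN conjunct2, THEN conjunct2, THEN conjunct2, THEN conjunct2, THEN conjunct2, THEN conjunct2, THEN conjunct2, THEN conjunct2, THEN conjunct2, THEN conjunct2, THEN conjunct2, THEN conjunct2, THEN conjunct2, THEN conjunct2, THEN conjunct1] by blast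
lemma ax_tmid: "T (ident C a) (ident C b) = ident C (tens C a b)"
  using Ms[THEN conjunct2, THEN conjunct2, THEN conjunct2, THEN conjunct2, THEN conjunct2, THEN conjunct2, THEN conjunct2, THEN conjunct2, THEN conjunct2, THEN conjunct2, THEN conjunct2, THEN conjunct2, THEN conjunct2, THEN conjunct2, THEN conjunct2, THEN conjunct1] by blast
lemma ax_tmadd: "f \<in> hom C a b p \<Longrightarrow> f' \<in> hom C a b p \<Longrightarrow> g \<in> hom C c d q \<Longrightarrow> g' \<in> hom C c d q \<Longrightarrow>
       T (f + f') g = T f g + T f' g \<and> T f (g + g') = T f g + T f g'"
  using Ms[THEN conjunct2, THEN conjunct2, THEN conjunct2, THEN conjunct2, THEN conjunct2, THEN conjunct2, THEN conjunct2, THEN conjunct2, THEN conjunct2, THEN conjunct2, THEN conjunct2, THEN conjunct2, THEN conjunct2, THEN conjunct2, THEN conjunct2, THEN conjunct2, THEN conjunct1] by blast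
lemma ax_inter: "f \<in> hom C a b p \<Longrightarrow> g \<in> hom C c d q \<Longrightarrow> f' \<in> hom C a' a r \<Longrightarrow> g' \<in> hom C c' c s \<Longrightarrow>
       cp (T f g) (T f' g') = neg1 (q * r) (T (cp f f') (cp g g'))"
  using Ms[THEN conjunct2, THEN conjunct2, THEN conjunct2, THEN conjunct2, THEN conjunct2, THEN conjunct2, THEN conjunct2, THEN conjunct2, THEN conjunct2, THEN conjunct2, THEN conjunct2, THEN conjunct2, THEN conjunct2, THEN conjunct2, THEN conjunct2, THEN conjunct2, THEN conjunct2, THEN conjunct1] by blast
lemma ax_diftm: "f \<in> hom C a b p \<Longrightarrow> g \<in> hom C c d q \<Longrightarrow>
       df (T f g) = T (df f) g + neg1 p (T f (df g))"
  using Ms[THEN conjunct2, THEN conjunct2, THEN conjunct2, THEN conjunct2, THEN conjunct2, THEN conjunct2, THEN conjunct2, THEN conjunct2, THEN conjunct2, THEN conjunct2, THEN conjunct2, THEN conjunct2, THEN conjunct2, THEN conjunct2, THEN conjunct2, THEN conjunct2, THEN conjunct2, THEN conjunct2] by blast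
lemma ax_difcmp: "g \<in> hom C b c p \<Longrightarrow> f \<in> hom C a b q \<Longrightarrow>
       df (cp g f) = cp (df g) f + neg1 p (cp g (df f))"
  using Ms[THEN conjunct2, THEN conjunct2, THEN conjunct2, THEN conjunct2, THEN conjunct2, THEN conjunct2, THEN conjunct2, THEN conjunct2, THEN conjunct2, THEN conjunct1] by blast

lemma opow_add: "tens C (Ao a) (Ao b) = Ao (a + b)"
  by (induction a) (auto simp: ax_tunit ax_tassoc)
lemma opow_1: "Ao 1 = A" by (simp add: ax_tunit)
lemma I1: "ident C A = I 1" by (simp add: idp_def ax_tunit)
lemma I0: "I 0 = ident C (tunit C)" by (simp add: idp_def)
lemma I_add: "T (I a) (I b) = I (a + b)"
  by (simp add: idp_def ax_tmid opow_add)
lemma I_Suc: "I (Suc n) = T (I 1) (I n)" using I_add[of 1 n] by simp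

lemma ty_0[simp]: "ty 0 a b d" by (simp add: ty_def ax_zero)
lemma ty_add: "ty f a b d \<Longrightarrow> ty g a b d \<Longrightarrow> ty (f + g) a b d"
  by (simp add: ty_def ax_add)
lemma ty_uminus[simp]: "ty f a b d \<Longrightarrow> ty (- f) a b d"
  by (simp add: ty_def ax_uminus)
lemma ty_diff: "ty f a b d \<Longrightarrow> ty g a b d \<Longrightarrow> ty (f - g) a b d"
  by (metis ty_add ty_uminus diff_conv_add_uminus)
lemma ty_neg1[simp]: "ty f a b d \<Longrightarrow> ty (neg1 n f) a b d"
  by (simp add: neg1_def ty_uminus)
lemma ty_sum: "(\<And>x. x \<in> S \<Longrightarrow> ty (f x) a b d) \<Longrightarrow> ty (sum f S) a b d"
  by (induction S rule: infinite_finite_induct) (auto intro: ty_0 ty_add)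
lemma ty_cmp: "ty g b c p \<Longrightarrow> ty f a b q \<Longrightarrow> d = p + q \<Longrightarrow> ty (cp g f) a c d"
  by (simp add: ty_def ax_cmp)
lemma ty_T: "ty f a b p \<Longrightarrow> ty g c e q \<Longrightarrow> x = a + c \<Longrightarrow> y = b + e \<Longrightarrow> d = p + q \<Longrightarrow> ty (T f g) x y d"
  using ax_tm[of f "Ao a" "Ao b" p g "Ao c" "Ao e" q] by (simp add: ty_def opow_add)
lemma ty_I: "a = n \<Longrightarrow> b = n \<Longrightarrow> d = 0 \<Longrightarrow> ty (I n) a b d"
  by (simp add: ty_def idp_def ax_ident)
lemma ty_dif: "ty f a b d \<Longrightarrow> d' = d + 1 \<Longrightarrow> ty (df f) a b d'"
  by (simp add: ty_def ax_dif)

lemmas tyI = ty_0 ty_add ty_uminus ty_diff ty_neg1 ty_sum ty_cmp ty_T ty_I ty_dif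

lemma cp_add_r: "ty g b c p \<Longrightarrow> ty f a b q \<Longrightarrow> ty f' a b q \<Longrightarrow> cp g (f + f') = cp g f + cp g f'"
  by (simp add: ty_def ax_distr)
lemma cp_add_l: "ty g b c p \<Longrightarrow> ty g' b c p \<Longrightarrow> ty f a b q \<Longrightarrow> cp (g + g') f = cp g f + cp g' f"
  by (simp add: ty_def ax_distl)
lemma cp_0_r[simp]: "ty g b c p \<Longrightarrow> cp g 0 = 0"
  using cp_add_r[of g b c p 0 0 0 0] by auto
lemma cp_0_l[simp]: "ty f a b q \<Longrightarrow> cp 0 f = 0"
  using cp_add_l[of 0 b 0 0 0 f a q] by auto
lemma cp_uminus_r: "ty g b c p \<Longrightarrow> ty f a b q \<Longrightarrow> cp g (- f) = - cp g f"
  using cp_add_r[of g b c p "f" a q "- f"] by (auto simp: eq_neg_iff_add_eq_0 add.commute)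
lemma cp_uminus_l: "ty g b c p \<Longrightarrow> ty f a b q \<Longrightarrow> cp (- g) f = - cp g f"
  using cp_add_l[of g b c p "- g" f a q] by (auto simp: eq_neg_iff_add_eq_0 add.commute)
lemma cp_neg1_r: "ty g b c p \<Longrightarrow> ty f a b q \<Longrightarrow> cp g (neg1 n f) = neg1 n (cp g f)"
  by (simp add: neg1_def cp_uminus_r)
lemma cp_neg1_l: "ty g b c p \<Longrightarrow> ty f a b q \<Longrightarrow> cp (neg1 n g) f = neg1 n (cp g f)"
  by (simp add: neg1_def cp_uminus_l)
lemma cp_sum_r: "ty g b c p \<Longrightarrow> (\<And>x. x \<in> S \<Longrightarrow> ty (f x) a b q) \<Longrightarrow> cp g (sum f S) = (\<Sum>x\<in>S. cp g (f x))"
proof (induction S rule: infinite_finite_induct)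
  case (insert x F)
  then have t: "ty (sum f F) a b q" by (auto intro!: ty_sum)
  from insert show ?case by (simp add: cp_add_r[OF _ _ t])
qed auto
lemma cp_sum_l: "(\<And>x. x \<in> S \<Longrightarrow> ty (g x) b c p) \<Longrightarrow> ty f a b q \<Longrightarrow> cp (sum g S) f = (\<Sum>x\<in>S. cp (g x) f)"
proof (induction S rule: infinite_finite_induct)
  case (insert x F)
  then have t: "ty (sum g F) b c p" by (auto intro!: ty_sum)
  from insert show ?case by (simp add: cp_add_l[OF _ t])
qed auto
lemma cp_diff_r: "ty g b c p \<Longrightarrow> ty f a b q \<Longrightarrow> ty f' a b q \<Longrightarrow> cp g (f - f') = cp g f - cp g f'"
  using cp_add_r[of g b c p f a q "- f'"] by (metis ty_uminus cp_uminus_r diff_conv_add_uminus)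
lemma cp_diff_l: "ty g b c p \<Longrightarrow> ty g' b c p \<Longrightarrow> ty f a b q \<Longrightarrow> cp (g - g') f = cp g f - cp g' f"
  using cp_add_l[of g b c p "- g'" f a q] by (metis ty_uminus cp_uminus_l diff_conv_add_uminus)

lemma T_add_l: "ty f a b p \<Longrightarrow> ty f' a b p \<Longrightarrow> ty g c e q \<Longrightarrow> T (f + f') g = T f g + T f' g"
  using ax_tmadd[of f "Ao a" "Ao b" p f' g "Ao c" "Ao e" q g] by (simp add: ty_def)
lemma T_add_r: "ty f a b p \<Longrightarrow> ty g c e q \<Longrightarrow> ty g' c e q \<Longrightarrow> T f (g + g') = T f g + T f g'"
  using ax_tmadd[of f "Ao a" "Ao b" p f g "Ao c" "Ao e" q g'] by (simp add: ty_def)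
lemma T_0_l[simp]: "ty g c e q \<Longrightarrow> T 0 g = 0"
  using T_add_l[of 0 0 0 0 0 g c e q] by auto
lemma T_0_r[simp]: "ty f a b p \<Longrightarrow> T f 0 = 0"
  using T_add_r[of f a b p 0 0 0 0 0] by auto
lemma T_uminus_l: "ty f a b p \<Longrightarrow> ty g c e q \<Longrightarrow> T (- f) g = - T f g"
  using T_add_l[of f a b p "- f" g c e q] by (auto simp: eq_neg_iff_add_eq_0 add.commute)
lemma T_uminus_r: "ty f a b p \<Longrightarrow> ty g c e q \<Longrightarrow> T f (- g) = - T f g"
  using T_add_r[of f a b p g c e q "- g"] by (auto simp: eq_neg_iff_add_eq_0 add.commute)
lemma T_neg1_l: "ty f a b p \<Longrightarrow> ty g c e q \<Longrightarrow> T (neg1 n f) g = neg1 n (T f g)"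
  by (simp add: neg1_def T_uminus_l)
lemma T_neg1_r: "ty f a b p \<Longrightarrow> ty g c e q \<Longrightarrow> T f (neg1 n g) = neg1 n (T f g)"
  by (simp add: neg1_def T_uminus_r)
lemma T_sum_l: "(\<And>x. x \<in> S \<Longrightarrow> ty (f x) a b p) \<Longrightarrow> ty g c e q \<Longrightarrow> T (sum f S) g = (\<Sum>x\<in>S. T (f x) g)"
proof (induction S rule: infinite_finite_induct)
  case (insert x F)
  then have t: "ty (sum f F) a b p" by (auto intro!: ty_sum)
  from insert show ?case by (simp add: T_add_l[OF _ t])
qed auto
lemma T_sum_r: "ty f a b p \<Longrightarrow> (\<And>x. x \<in> S \<Longrightarrow> ty (g x) c e q) \<Longrightarrow> T f (sum g S) = (\<Sum>x\<in>S. T f (g x))"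
proof (induction S rule: infinite_finite_induct)
  case (insert x F)
  then have t: "ty (sum g F) c e q" by (auto intro!: ty_sum)
  from insert show ?case by (simp add: T_add_r[OF _ _ t])
qed auto
lemma T_diff_l: "ty f a b p \<Longrightarrow> ty f' a b p \<Longrightarrow> ty g c e q \<Longrightarrow> T (f - f') g = T f g - T f' g"
  using T_add_l[of f a b p "- f'" g c e q] by (metis ty_uminus T_uminus_l diff_conv_add_uminus)

lemma T_assoc: "ty f1 a b p \<Longrightarrow> ty f2 c d q \<Longrightarrow> ty f3 e g r \<Longrightarrow> T (T f1 f2) f3 = T f1 (T f2 f3)"
  unfolding ty_def by (rule ax_tmassoc)
lemma T_I0: "ty f a b d \<Longrightarrow> T (I 0) f = f" "ty f a b d \<Longrightarrow> T f (I 0) = f"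
  using ax_tmunit[of f "Ao a" "Ao b" d] by (auto simp: ty_def I0)
lemma cp_I: "ty f a b d \<Longrightarrow> cp (I b) f = f" "ty f a b d \<Longrightarrow> cp f (I a) = f"
  by (auto simp: ty_def idp_def ax_idl ax_idr)
lemma inter: "ty f b b' p \<Longrightarrow> ty g c c' q \<Longrightarrow> ty f' a b r \<Longrightarrow> ty g' e c s \<Longrightarrow>
   cp (T f g) (T f' g') = neg1 (q * r) (T (cp f f') (cp g g'))"
  unfolding ty_def by (rule ax_inter)
lemma dif_T: "ty f a b p \<Longrightarrow> ty g c e q \<Longrightarrow> df (T f g) = T (df f) g + neg1 p (T f (df g))"
  unfolding ty_def by (rule ax_diftm)
lemma dif_I[simp]: "df (I n) = 0" by (simp add: idp_def ax_difid)
lemma dif_add: "ty f a b d \<Longrightarrow> ty g a b d \<Longrightarrow> df (f + g) = df f + df g"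
  unfolding ty_def by (rule ax_difadd)
lemma dif_0[simp]: "df 0 = 0"
  using dif_add[of 0 0 0 0 0] by auto
lemma dif_uminus: "ty f a b d \<Longrightarrow> df (- f) = - df f"
  using dif_add[of f a b d "- f"] by (auto simp: eq_neg_iff_add_eq_0 add.commute)
lemma dif_neg1: "ty f a b d \<Longrightarrow> df (neg1 n f) = neg1 n (df f)"
  by (simp add: neg1_def dif_uminus)
lemma dif_diff: "ty f a b d \<Longrightarrow> ty g a b d \<Longrightarrow> df (f - g) = df f - df g"
  using dif_add[of f a b d "- g"] by (metis ty_uminus dif_uminus diff_conv_add_uminus)
lemma dif_sum: "(\<And>x. x \<in> S \<Longrightarrow> ty (f x) a b d) \<Longrightarrow> df (sum f S) = (\<Sum>x\<in>S. df (f x))"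
proof (induction S rule: infinite_finite_induct)
  case (insert x F)
  then have t: "ty (sum f F) a b d" by (auto intro!: ty_sum)
  from insert show ?case by (simp add: dif_add[OF _ t])
qed auto

end



locale S = L C A for C :: "('o, 'm::ab_group_add) mdg" and A :: 'o +
  fixes m hr :: "nat \<Rightarrow> 'm" and \<eta> :: 'm
  assumes tym: "\<And>i. 2 \<le> i \<Longrightarrow> ty (m i) i 1 (2 - int i)"
    and tyh: "\<And>i. 1 \<le> i \<Longrightarrow> ty (hr i) i 1 (- int i)"
    and tye: "ty \<eta> 0 1 0" and de: "df \<eta> = 0"
begin

lemma tymI: "2 \<le> i \<Longrightarrow> a = i \<Longrightarrow> b = 1 \<Longrightarrow> d = 2 - int i \<Longrightarrow> ty (m i) a b d"
  using tym by simp
lemma tyhI: "1 \<le> i \<Longrightarrow> a = i \<Longrightarrow> b = 1 \<Longrightarrow> d = - int i \<Longrightarrow> ty (hr i) a b d"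
  using tyh by simp
lemma tyeI: "a = 0 \<Longrightarrow> b = 1 \<Longrightarrow> d = 0 \<Longrightarrow> ty \<eta> a b d"
  using tye by simp

definition Q :: "nat \<Rightarrow> nat \<Rightarrow> 'm" where
  "Q i k = (\<Sum>j<i. neg1 (int (j*k)) (T (I (i-j-1)) (T (m (k+1)) (I j))))"

lemma tyI0: "ty (I n) n n 0" by (rule ty_I) auto
lemma tym1: "1 \<le> k \<Longrightarrow> ty (m (k+1)) (k+1) 1 (1 - int k)"
  using tym[of "k+1"] by simp
lemma tyh1: "ty (hr (k+1)) (k+1) 1 (- int k - 1)"
  by (rule tyhI) auto

lemma tyQterm: "j < i \<Longrightarrow> 1 \<le> k \<Longrightarrow> ty (T (I (i-j-1)) (T (m (k+1)) (I j))) (i+k) i (1 - int k)"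
proof -
  assume j: "j < i" and k: "1 \<le> k"
  have "ty (T (m (k+1)) (I j)) (k+1+j) (1+j) (1 - int k)"
    by (rule ty_T[OF tym1[OF k] tyI0]) auto
  then show ?thesis by (rule ty_T[OF tyI0]) (use j in auto)
qed

lemma tyQ: "1 \<le> k \<Longrightarrow> ty (Q i k) (i+k) i (1 - int k)"
  unfolding Q_def by (intro ty_sum ty_neg1 tyQterm) auto

lemma tyQI: "1 \<le> k \<Longrightarrow> a = i + k \<Longrightarrow> b = i \<Longrightarrow> d = 1 - int k \<Longrightarrow> ty (Q i k) a b d"
  using tyQ by simp

lemma Q0[simp]: "Q 0 k = 0" by (simp add: Q_def)
lemma Q1: "1 \<le> k \<Longrightarrow> Q 1 k = m (k+1)"
proof -
  assume k: "1 \<le> k"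
  have t: "ty (m (k+1)) (k+1) 1 (1 - int k)" using tym1 k by auto
  have "ty (T (m (k+1)) (I 0)) (k+1) 1 (1 - int k)" by (rule ty_T[OF t tyI0]) auto
  then show ?thesis using t tyI0[of 0] by (simp add: Q_def T_I0)
qed

lemma Q_split:
  assumes k: "1 \<le> k"
  shows "Q (a + r) k = T (I a) (Q r k) + neg1 (int (r*k)) (T (Q a k) (I r))"
proof -
  define t where "t = (\<lambda>i j. neg1 (int (j*k)) (T (I (i-j-1)) (T (m (k+1)) (I j))))"
  have tyt: "j < i \<Longrightarrow> ty (t i j) (i+k) i (1 - int k)" for i j
    unfolding t_def by (rule ty_neg1, rule tyQterm) (use k in auto)
  have Qt: "Q i k = (\<Sum>j<i. t i j)" for i unfolding Q_def t_def ..
  have "Q (a+r) k = (\<Sum>j\<in>{0..<r}. t (a+r) j) + (\<Sum>j\<in>{r..<a+r}. t (a+r) j)"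
    unfolding Qt lessThan_atLeast0 by (rule sum.atLeastLessThan_concat[symmetric]) auto
  also have "(\<Sum>j\<in>{0..<r}. t (a+r) j) = T (I a) (Q r k)"
  proof -
    have "T (I a) (Q r k) = (\<Sum>j<r. T (I a) (t r j))"
      unfolding Qt by (rule T_sum_r[OF tyI0]) (rule tyt, auto)
    also have "\<dots> = (\<Sum>j<r. t (a+r) j)"
    proof (rule sum.cong[OF refl])
      fix j assume j: "j \<in> {..<r}"
      have t1: "ty (T (m (k+1)) (I j)) (k+1+j) (1+j) (1 - int k)"
        by (rule ty_T[OF tym1[OF k] tyI0]) auto
      have t2: "ty (T (I (r-j-1)) (T (m (k+1)) (I j))) (r+k) r (1 - int k)"
        by (rule tyQterm) (use j k in auto)
      have "T (I a) (t r j) = neg1 (int (j*k)) (T (I a) (T (I (r-j-1)) (T (m (k+1)) (I j))))"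
        unfolding t_def by (rule T_neg1_r[OF tyI0 t2])
      also have "T (I a) (T (I (r-j-1)) (T (m (k+1)) (I j))) = T (T (I a) (I (r-j-1))) (T (m (k+1)) (I j))"
        by (rule T_assoc[OF tyI0 tyI0 t1, symmetric])
      also have "T (I a) (I (r-j-1)) = I (a+r-j-1)" using j by (simp add: I_add)
      finally show "T (I a) (t r j) = t (a+r) j" unfolding t_def .
    qed
    finally show ?thesis by (simp add: lessThan_atLeast0)
  qed
  also have "(\<Sum>j\<in>{r..<a+r}. t (a+r) j) = (\<Sum>j\<in>{0..<a}. t (a+r) (j+r))"
    using sum.shift_bounds_nat_ivl[of "t (a+r)" 0 r a] by simp
  also have "\<dots> = neg1 (int (r*k)) (T (Q a k) (I r))"
  proof -
    have "T (Q a k) (I r) = (\<Sum>j<a. T (t a j) (I r))"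
      unfolding Qt by (rule T_sum_l[OF _ tyI0]) (rule tyt, auto)
    then have "neg1 (int (r*k)) (T (Q a k) (I r)) = (\<Sum>j<a. neg1 (int (r*k)) (T (t a j) (I r)))"
      by (simp add: neg1_sum)
    also have "\<dots> = (\<Sum>j\<in>{0..<a}. t (a+r) (j+r))"
      unfolding lessThan_atLeast0
    proof (rule sum.cong[OF refl])
      fix j assume j: "j \<in> {0..<a}"
      have t1: "ty (T (m (k+1)) (I j)) (k+1+j) (1+j) (1 - int k)"
        by (rule ty_T[OF tym1[OF k] tyI0]) auto
      have t2: "ty (T (I (a-j-1)) (T (m (k+1)) (I j))) (a+k) a (1 - int k)"
        by (rule tyQterm) (use j k in auto)
      have "T (t a j) (I r) = neg1 (int (j*k)) (T (T (I (a-j-1)) (T (m (k+1)) (I j))) (I r))"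
        unfolding t_def by (rule T_neg1_l[OF t2 tyI0])
      also have "T (T (I (a-j-1)) (T (m (k+1)) (I j))) (I r) = T (I (a-j-1)) (T (T (m (k+1)) (I j)) (I r))"
        by (rule T_assoc[OF tyI0 t1 tyI0])
      also have "T (T (m (k+1)) (I j)) (I r) = T (m (k+1)) (I (j + r))"
        using T_assoc[OF tym1[OF k] tyI0 tyI0] by (simp add: I_add)
      finally have "neg1 (int (r*k)) (T (t a j) (I r)) =
          neg1 (int (r*k) + int (j*k)) (T (I (a-j-1)) (T (m (k+1)) (I (j + r))))" by simp
      also have "int (r*k) + int (j*k) = int ((j+r)*k)" by (simp add: algebra_simps)
      also have "a - j - 1 = a + r - (j + r) - 1" by simp
      finally show "neg1 (int (r*k)) (T (t a j) (I r)) = t (a+r) (j+r)" unfolding t_def .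
    qed
    finally show ?thesis ..
  qed
  finally show ?thesis .
qed

abbreviation \<alpha> where "\<alpha> \<equiv> bar_alg C A m"
abbreviation R where "R \<equiv> rbar C A (-1) hr"
definition Sm :: "int \<Rightarrow> int \<Rightarrow> 'm" where
  "Sm p q = (if q = p - 1 \<and> p \<le> 0 then neg1 p (T \<eta> (I (nat (1-p)))) else 0)"

lemma Q_alt: "(\<Sum>j<i. neg1 (int (j * k)) (T (I (i - j - 1)) (T (m (k + 1)) (I j)))) = Q i k"
  by (simp add: Q_def)

lemma alpha_eq: "\<alpha> p q = (if p < q \<and> q \<le> 0 then neg1 (q * (q - p + 1)) (Q (nat (1-q)) (nat (q-p))) else 0)"
proof (cases "p < q \<and> q \<le> 0")
  case True
  have e1: "int (nat (1 - q) - 1) = - q" using True by (subst of_nat_diff) auto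
  have e2: "int (nat (q - p)) = q - p" using True by simp
  have "int ((nat (1 - q) - 1) * (nat (q - p) + 1)) = - q * (q - p + 1)"
    by (simp only: of_nat_mult of_nat_add of_nat_1 e1 e2)
  then have "neg1 (int ((nat (1 - q) - 1) * (nat (q - p) + 1))) x = neg1 (q * (q - p + 1)) x" for x :: 'm
    by (intro neg1_cong) simp
  then show ?thesis using True unfolding bar_alg_def Let_def Q_alt by simp
qed (auto simp: bar_alg_def)

lemma R_eq: "R p q = (if p \<le> q \<and> q \<le> 0 then neg1 q (T (hr (nat (q-p) + 1)) (I (nat (-q)))) else 0)"
proof (cases "p \<le> q \<and> q \<le> 0")
  case True
  have e1: "int (nat (1 - q) - 1) = - q" using True by (subst of_nat_diff) auto
  have "- 1 * int (nat (1 - q) - 1) = - (- q)" by (simp only: e1)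
  then have "neg1 (- 1 * int (nat (1 - q) - 1)) x = neg1 q x" for x :: 'm
    by (intro neg1_cong) simp
  moreover have "nat (1 - q) - 1 = nat (- q)" using True by simp
  ultimately show ?thesis using True unfolding rbar_def Let_def by simp
qed (auto simp: rbar_def)

lemma ty_alpha: "ty (\<alpha> p q) (nat (1-p)) (nat (1-q)) (1 + p - q)"
proof (cases "p < q \<and> q \<le> 0")
  case True
  have "ty (Q (nat (1-q)) (nat (q-p))) (nat (1-p)) (nat (1-q)) (1 + p - q)"
    by (rule tyQI) (use True in auto)
  then show ?thesis using True by (simp add: alpha_eq)
qed (auto simp: alpha_eq)

lemma ty_R: "ty (R p q) (nat (1-p)) (nat (1-q)) (-1 + p - q)"
proof (cases "p \<le> q \<and> q \<le> 0")
  case True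
  have "ty (T (hr (nat (q-p) + 1)) (I (nat (-q)))) (nat (1-p)) (nat (1-q)) (-1 + p - q)"
    by (rule ty_T[OF tyh1 tyI0]) (use True in auto)
  then show ?thesis using True by (simp add: R_eq)
qed (auto simp: R_eq)

lemma ty_Sm: "ty (Sm p q) (nat (1-p)) (nat (1-q)) (-1 + p - q)"
proof (cases "q = p - 1 \<and> p \<le> 0")
  case True
  have "ty (T \<eta> (I (nat (1-p)))) (nat (1-p)) (nat (1-q)) (-1 + p - q)"
    by (rule ty_T[OF tye tyI0]) (use True in auto)
  then show ?thesis using True by (simp add: Sm_def)
qed (auto simp: Sm_def)

definition good :: "int \<Rightarrow> (int \<Rightarrow> int \<Rightarrow> 'm) \<Rightarrow> bool" where
  "good n X \<longleftrightarrow> (\<forall>p q. ty (X p q) (nat (1-p)) (nat (1-q)) (n + p - q)) \<and>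
     (\<forall>p q. X p q \<noteq> 0 \<longrightarrow> p - 1 \<le> q \<and> q \<le> 0)"

lemma twd_sum:
  assumes g: "good n X"
  shows "tw_d C \<alpha> \<alpha> n X p q = neg1 q (df (X p q)) + (\<Sum>m\<in>{p-1..0}. cp (\<alpha> m q) (X p m))
           - neg1 n (\<Sum>m\<in>{p-1..0}. cp (X m q) (\<alpha> p m))"
proof -
  have tyX: "ty (X p q) (nat (1-p)) (nat (1-q)) (n + p - q)" for p q using g by (simp add: good_def)
  have sX: "X p q \<noteq> 0 \<Longrightarrow> p - 1 \<le> q \<and> q \<le> 0" for p q using g by (simp add: good_def)
  have 1: "fsum (\<lambda>m. cp (\<alpha> m q) (X p m)) = (\<Sum>m\<in>{p-1..0}. cp (\<alpha> m q) (X p m))"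
  proof (rule fsum_eq_sum)
    fix x assume "x \<notin> {p-1..0}"
    then have "X p x = 0" using sX[of p x] by auto
    then show "cp (\<alpha> x q) (X p x) = 0" by (simp add: cp_0_r[OF ty_alpha])
  qed simp
  have 2: "fsum (\<lambda>m. cp (X m q) (\<alpha> p m)) = (\<Sum>m\<in>{p-1..0}. cp (X m q) (\<alpha> p m))"
  proof (rule fsum_eq_sum)
    fix x assume "x \<notin> {p-1..0}"
    then have "\<alpha> p x = 0" by (auto simp: alpha_eq)
    then show "cp (X x q) (\<alpha> p x) = 0" by (simp add: cp_0_r[OF tyX])
  qed simp
  show ?thesis unfolding tw_d_def 1 2 ..
qed

lemma good_diff: "good n X \<Longrightarrow> good n Y \<Longrightarrow> good n (\<lambda>p q. X p q - Y p q)"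
  unfolding good_def by (auto intro!: ty_diff) (metis)+

lemma twd_diff:
  assumes gX: "good n X" and gY: "good n Y"
  shows "tw_d C \<alpha> \<alpha> n (\<lambda>p q. X p q - Y p q) p q = tw_d C \<alpha> \<alpha> n X p q - tw_d C \<alpha> \<alpha> n Y p q"
proof -
  have tyX: "ty (X p q) (nat (1-p)) (nat (1-q)) (n + p - q)" for p q using gX by (simp add: good_def)
  have tyY: "ty (Y p q) (nat (1-p)) (nat (1-q)) (n + p - q)" for p q using gY by (simp add: good_def)
  have a: "df (X p q - Y p q) = df (X p q) - df (Y p q)" by (rule dif_diff[OF tyX tyY])
  have b: "cp (\<alpha> m q) (X p m - Y p m) = cp (\<alpha> m q) (X p m) - cp (\<alpha> m q) (Y p m)" for m
    by (rule cp_diff_r[OF ty_alpha tyX tyY])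
  have c: "cp (X m q - Y m q) (\<alpha> p m) = cp (X m q) (\<alpha> p m) - cp (Y m q) (\<alpha> p m)" for m
    by (rule cp_diff_l[OF tyX tyY ty_alpha])
  show ?thesis
    unfolding twd_sum[OF good_diff[OF gX gY]] twd_sum[OF gX] twd_sum[OF gY] a b c sum_subtractf
    by (simp add: algebra_simps)
qed

lemma good_R: "good (-1) R"
  unfolding good_def using ty_R by (auto simp: R_eq split: if_splits)
lemma good_Sm: "good (-1) Sm"
  unfolding good_def using ty_Sm by (auto simp: Sm_def split: if_splits)

lemma nat1[simp]: "nat (1 + int r) = Suc r" by simp

lemma neg1_eqI: "even (a - b) \<Longrightarrow> x = y \<Longrightarrow> neg1 a x = neg1 b y"
  by (auto simp: neg1_def)

lemma alpha_rk: "1 \<le> a \<Longrightarrow> \<alpha> (- int r - int a) (- int r) = neg1 (int r * (int a + 1)) (Q (r+1) a)"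
  unfolding alpha_eq by (auto intro!: neg1_eqI)

lemma R_rk: "R (- int r - int k) (- int r) = neg1 (int r) (T (hr (k+1)) (I r))"
  unfolding R_eq by (auto intro!: neg1_eqI)

lemma term2:
  assumes a1: "1 \<le> a" and ak: "a \<le> k"
  shows "cp (\<alpha> (- int r - int a) (- int r)) (R (- int r - int k) (- int r - int a)) =
     neg1 (int r * int a + int k * int a + int k + 1) (T (hr (k-a+1)) (Q r a))
     + neg1 (int a) (T (cp (m (a+1)) (T (hr (k-a+1)) (I a))) (I r))"
proof -
  define h where "h = hr (k-a+1)"
  have eR: "R (- int r - int k) (- int r - int a) = neg1 (int (r+a)) (T h (I (r+a)))"
    using R_rk[of "r+a" "k-a"] ak by (simp add: of_nat_diff h_def)
  have th: "ty h (k-a+1) 1 (- int (k-a) - 1)" unfolding h_def by (rule tyh1)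
  have tIra: "ty (I (r+a)) (r+a) (r+a) 0" by (rule tyI0)
  have tTh: "ty (T h (I (r+a))) (k+r+1) (r+a+1) (- int (k-a) - 1)"
    by (rule ty_T[OF th tIra]) (use ak in auto)
  have tQr: "ty (Q r a) (r+a) r (1 - int a)" by (rule tyQ[OF a1])
  have tQr1: "ty (Q (r+1) a) (r+a+1) (r+1) (1 - int a)" by (rule tyQI[OF a1]) auto
  have tm: "ty (m (a+1)) (a+1) 1 (1 - int a)" by (rule tym1[OF a1])
  have tX: "ty (T (I 1) (Q r a)) (r+a+1) (r+1) (1 - int a)" by (rule ty_T[OF tyI0 tQr]) auto
  have tY0: "ty (T (m (a+1)) (I r)) (r+a+1) (r+1) (1 - int a)" by (rule ty_T[OF tm tyI0]) auto
  have tY: "ty (neg1 (int (r*a)) (T (m (a+1)) (I r))) (r+a+1) (r+1) (1 - int a)" by (rule ty_neg1[OF tY0])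
  have tTha: "ty (T h (I a)) (k+1) (a+1) (- int (k-a) - 1)" by (rule ty_T[OF th tyI0]) (use ak in auto)
  have Qs: "Q (r+1) a = T (I 1) (Q r a) + neg1 (int (r*a)) (T (m (a+1)) (I r))"
    using Q_split[OF a1, of 1 r] Q1[OF a1] by simp
  have "cp (\<alpha> (- int r - int a) (- int r)) (R (- int r - int k) (- int r - int a))
      = cp (neg1 (int r * (int a + 1)) (Q (r+1) a)) (neg1 (int (r+a)) (T h (I (r+a))))"
    by (simp add: alpha_rk[OF a1] eR)
  also have "\<dots> = neg1 (int r * (int a + 1)) (neg1 (int (r+a)) (cp (Q (r+1) a) (T h (I (r+a)))))"
    unfolding cp_neg1_l[OF tQr1 ty_neg1[OF tTh]] cp_neg1_r[OF tQr1 tTh] ..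
  also have "cp (Q (r+1) a) (T h (I (r+a))) = cp (T (I 1) (Q r a)) (T h (I (r+a)))
        + cp (neg1 (int (r*a)) (T (m (a+1)) (I r))) (T h (I (r+a)))"
    unfolding Qs by (rule cp_add_l[OF tX tY tTh])
  also have "cp (T (I 1) (Q r a)) (T h (I (r+a))) = neg1 ((1 - int a) * (- int (k-a) - 1)) (T h (Q r a))"
    using inter[OF tyI0 tQr th tIra] cp_I(1)[OF th] cp_I(2)[OF tQr] by simp
  also have "cp (neg1 (int (r*a)) (T (m (a+1)) (I r))) (T h (I (r+a)))
       = neg1 (int (r*a)) (T (cp (m (a+1)) (T h (I a))) (I r))"
  proof -
    have "T h (I (r+a)) = T (T h (I a)) (I r)"
      using T_assoc[OF th tyI0 tyI0] by (simp add: I_add add.commute)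
    moreover have "cp (T (m (a+1)) (I r)) (T (T h (I a)) (I r)) = T (cp (m (a+1)) (T h (I a))) (I r)"
      using inter[OF tm tyI0 tTha tyI0] cp_I(1)[OF tyI0[of r]] by simp
    ultimately show ?thesis unfolding cp_neg1_l[OF tY0 tTh] by (simp only:)
  qed
  finally have "cp (\<alpha> (- int r - int a) (- int r)) (R (- int r - int k) (- int r - int a)) =
     neg1 (int r * (int a + 1) + int (r+a) + (1 - int a) * (- int (k-a) - 1)) (T h (Q r a))
     + neg1 (int r * (int a + 1) + int (r+a) + int (r*a)) (T (cp (m (a+1)) (T h (I a))) (I r))"
    by (simp add: algebra_simps)
  also have "\<dots> = neg1 (int r * int a + int k * int a + int k + 1) (T h (Q r a))
     + neg1 (int a) (T (cp (m (a+1)) (T h (I a))) (I r))"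
    using ak by (intro arg_cong2[where f="(+)"] neg1_eqI) (auto simp: of_nat_diff algebra_simps)
  finally show ?thesis unfolding h_def .
qed

lemma term3:
  assumes b1: "1 \<le> b" and bk: "b \<le> k"
  shows "cp (R (- int r - int k + int b) (- int r)) (\<alpha> (- int r - int k) (- int r - int k + int b)) =
     neg1 (int r * int b + int k * int b + int k) (T (hr (k-b+1)) (Q r b))
     + neg1 ((int k - int b) * (int b + 1)) (T (cp (hr (k-b+1)) (Q (k-b+1) b)) (I r))"
proof -
  define h where "h = hr (k-b+1)"
  have eR: "R (- int r - int k + int b) (- int r) = neg1 (int r) (T h (I r))"
  proof -
    have e: "- int r - int (k - b) = - int r - int k + int b" using bk by (simp add: of_nat_diff)
    show ?thesis using R_rk[of r "k-b"] unfolding e h_def .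
  qed
  have eA: "\<alpha> (- int r - int k) (- int r - int k + int b) = neg1 (int (r+k-b) * (int b + 1)) (Q (r+k-b+1) b)"
  proof -
    have e1: "- int (r+k-b) - int b = - int r - int k" using bk by (simp add: of_nat_diff)
    have e2: "- int (r+k-b) = - int r - int k + int b" using bk by (simp add: of_nat_diff)
    show ?thesis using alpha_rk[OF b1, of "r+k-b", unfolded e1, unfolded e2] .
  qed
  have th: "ty h (k-b+1) 1 (- int (k-b) - 1)" unfolding h_def by (rule tyh1)
  have tTh: "ty (T h (I r)) (r+k-b+1) (r+1) (- int (k-b) - 1)"
    by (rule ty_T[OF th tyI0]) (use bk in auto)
  have tQ: "ty (Q (r+k-b+1) b) (r+k+1) (r+k-b+1) (1 - int b)" by (rule tyQI[OF b1]) (use bk in auto)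
  have tQr: "ty (Q r b) (r+b) r (1 - int b)" by (rule tyQ[OF b1])
  have tQ': "ty (Q (k-b+1) b) (k+1) (k-b+1) (1 - int b)" by (rule tyQI[OF b1]) (use bk in auto)
  have tX: "ty (T (I (k-b+1)) (Q r b)) (r+k+1) (r+k-b+1) (1 - int b)"
    by (rule ty_T[OF tyI0 tQr]) (use bk in auto)
  have tY0: "ty (T (Q (k-b+1) b) (I r)) (r+k+1) (r+k-b+1) (1 - int b)"
    by (rule ty_T[OF tQ' tyI0]) (use bk in auto)
  have tY: "ty (neg1 (int (r*b)) (T (Q (k-b+1) b) (I r))) (r+k+1) (r+k-b+1) (1 - int b)"
    by (rule ty_neg1[OF tY0])
  have Qs: "Q (r+k-b+1) b = T (I (k-b+1)) (Q r b) + neg1 (int (r*b)) (T (Q (k-b+1) b) (I r))"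
  proof -
    have "r+k-b+1 = (k-b+1) + r" using bk by simp
    then show ?thesis using Q_split[OF b1, of "k-b+1" r] by simp
  qed
  have "cp (R (- int r - int k + int b) (- int r)) (\<alpha> (- int r - int k) (- int r - int k + int b))
      = cp (neg1 (int r) (T h (I r))) (neg1 (int (r+k-b) * (int b + 1)) (Q (r+k-b+1) b))"
    by (simp only: eR eA)
  also have "\<dots> = neg1 (int r) (neg1 (int (r+k-b) * (int b + 1)) (cp (T h (I r)) (Q (r+k-b+1) b)))"
    unfolding cp_neg1_l[OF tTh ty_neg1[OF tQ]] cp_neg1_r[OF tTh tQ] ..
  also have "cp (T h (I r)) (Q (r+k-b+1) b) = cp (T h (I r)) (T (I (k-b+1)) (Q r b))
        + cp (T h (I r)) (neg1 (int (r*b)) (T (Q (k-b+1) b) (I r)))"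
    unfolding Qs by (rule cp_add_r[OF tTh tX tY])
  also have "cp (T h (I r)) (T (I (k-b+1)) (Q r b)) = T h (Q r b)"
    using inter[OF th tyI0 tyI0 tQr] cp_I(2)[OF th] cp_I(1)[OF tQr] by simp
  also have "cp (T h (I r)) (neg1 (int (r*b)) (T (Q (k-b+1) b) (I r)))
       = neg1 (int (r*b)) (T (cp h (Q (k-b+1) b)) (I r))"
    unfolding cp_neg1_r[OF tTh tY0]
    using inter[OF th tyI0 tQ' tyI0] cp_I(1)[OF tyI0[of r]] by simp
  finally have "cp (R (- int r - int k + int b) (- int r)) (\<alpha> (- int r - int k) (- int r - int k + int b)) =
     neg1 (int r + int (r+k-b) * (int b + 1)) (T h (Q r b))
     + neg1 (int r + int (r+k-b) * (int b + 1) + int (r*b)) (T (cp h (Q (k-b+1) b)) (I r))"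
    by (simp add: algebra_simps)
  also have "\<dots> = neg1 (int r * int b + int k * int b + int k) (T h (Q r b))
     + neg1 ((int k - int b) * (int b + 1)) (T (cp h (Q (k-b+1) b)) (I r))"
    using bk by (intro arg_cong2[where f="(+)"] neg1_eqI) (auto simp: of_nat_diff algebra_simps)
  finally show ?thesis unfolding h_def .
qed

lemma sum_reidx:
  assumes "finite SS" "inj_on f K" "f ` K \<subseteq> SS" "\<And>x. x \<in> SS \<Longrightarrow> x \<notin> f ` K \<Longrightarrow> g x = 0"
  shows "sum g SS = sum (g \<circ> f) K"
proof -
  have "sum g SS = sum g (f ` K)"
    by (rule sum.mono_neutral_right) (use assms in auto)
  also have "\<dots> = sum (g \<circ> f) K" by (rule sum.reindex[OF assms(2)])
  finally show ?thesis .
qed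

definition Dc :: "nat \<Rightarrow> 'm" where
  "Dc k = df (hr (k+1)) + (\<Sum>a\<in>{1..k}. neg1 (int a) (cp (m (a+1)) (T (hr (k-a+1)) (I a))))
     + (\<Sum>b\<in>{1..k}. neg1 ((int k - int b) * (int b + 1)) (cp (hr (k-b+1)) (Q (k-b+1) b)))"

lemma ty_Dc1: "1 \<le> a \<Longrightarrow> a \<le> k \<Longrightarrow> ty (cp (m (a+1)) (T (hr (k-a+1)) (I a))) (k+1) 1 (- int k)"
  by (rule ty_cmp[OF tym1 ty_T[OF tyh1 tyI0]]) auto
lemma ty_Dc2: "1 \<le> b \<Longrightarrow> b \<le> k \<Longrightarrow> ty (cp (hr (k-b+1)) (Q (k-b+1) b)) (k+1) 1 (- int k)"
  by (rule ty_cmp[OF tyh1 tyQI]) auto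

lemma ty_Dc: "ty (Dc k) (k+1) 1 (- int k)"
proof -
  have t1: "ty (df (hr (k+1))) (k+1) 1 (- int k)" by (rule ty_dif[OF tyh1]) auto
  have t2: "ty (\<Sum>a\<in>{1..k}. neg1 (int a) (cp (m (a+1)) (T (hr (k-a+1)) (I a)))) (k+1) 1 (- int k)"
    by (intro ty_sum ty_neg1 ty_Dc1) auto
  have t3: "ty (\<Sum>b\<in>{1..k}. neg1 ((int k - int b) * (int b + 1)) (cp (hr (k-b+1)) (Q (k-b+1) b))) (k+1) 1 (- int k)"
    by (intro ty_sum ty_neg1 ty_Dc2) auto
  show ?thesis unfolding Dc_def by (rule ty_add[OF ty_add[OF t1 t2] t3])
qed

lemma twdR:
  "tw_d C \<alpha> \<alpha> (-1) R (- int r - int k) (- int r) = T (Dc k) (I r)"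
proof -
  define p where "p = - int r - int k"
  define q where "q = - int r"
  define X where "X = (\<lambda>a. T (hr (k-a+1)) (Q r a))"
  define Y2 where "Y2 = (\<lambda>a. T (cp (m (a+1)) (T (hr (k-a+1)) (I a))) (I r))"
  define Y3 where "Y3 = (\<lambda>b. T (cp (hr (k-b+1)) (Q (k-b+1) b)) (I r))"
  have th: "ty (hr (k+1)) (k+1) 1 (- int k - 1)" by (rule tyh1)
  have tT: "ty (T (hr (k+1)) (I r)) (k+1+r) (1+r) (- int k - 1)" by (rule ty_T[OF th tyI0]) auto
  have P1: "neg1 q (df (R p q)) = T (df (hr (k+1))) (I r)"
    unfolding p_def q_def R_rk dif_neg1[OF tT] dif_T[OF th tyI0]
    using th by (simp add: T_0_r)
  have P2: "(\<Sum>m\<in>{p-1..0}. cp (\<alpha> m q) (R p m)) =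
      (\<Sum>a\<in>{1..k}. neg1 (int r * int a + int k * int a + int k + 1) (X a) + neg1 (int a) (Y2 a))"
  proof -
    have "(\<Sum>m\<in>{p-1..0}. cp (\<alpha> m q) (R p m)) = (\<Sum>a\<in>{1..k}. cp (\<alpha> (q - int a) q) (R p (q - int a)))"
    proof (rule sum_reidx[where f="\<lambda>a. q - int a", unfolded comp_def])
      show "inj_on (\<lambda>a. q - int a) {1..k}" by (auto simp: inj_on_def)
      show "(\<lambda>a. q - int a) ` {1..k} \<subseteq> {p - 1..0}" by (auto simp: p_def q_def)
      fix x assume x: "x \<in> {p-1..0}" "x \<notin> (\<lambda>a. q - int a) ` {1..k}"
      show "cp (\<alpha> x q) (R p x) = 0"
      proof (cases "p \<le> x \<and> x < q")
        case True
        then have "x = q - int (nat (q - x))" "nat (q - x) \<in> {1..k}" by (auto simp: p_def q_def)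
        then show ?thesis using x(2) by blast
      next
        case False
        show ?thesis
        proof (cases "x < p")
          case True then have "R p x = 0" by (simp add: R_eq)
          then show ?thesis by (simp add: cp_0_r[OF ty_alpha])
        next
          case F2: False
          then have "\<alpha> x q = 0" using False by (simp add: alpha_eq)
          then show ?thesis by (simp add: cp_0_l[OF ty_R])
        qed
      qed
    qed simp
    also have "\<dots> = (\<Sum>a\<in>{1..k}. neg1 (int r * int a + int k * int a + int k + 1) (X a) + neg1 (int a) (Y2 a))"
      by (rule sum.cong[OF refl]) (auto simp: p_def q_def X_def Y2_def term2)
    finally show ?thesis .
  qed
  have P3: "(\<Sum>m\<in>{p-1..0}. cp (R m q) (\<alpha> p m)) =
      (\<Sum>b\<in>{1..k}. neg1 (int r * int b + int k * int b + int k) (X b) + neg1 ((int k - int b) * (int b + 1)) (Y3 b))"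
  proof -
    have "(\<Sum>m\<in>{p-1..0}. cp (R m q) (\<alpha> p m)) = (\<Sum>b\<in>{1..k}. cp (R (p + int b) q) (\<alpha> p (p + int b)))"
    proof (rule sum_reidx[where f="\<lambda>b. p + int b", unfolded comp_def])
      show "inj_on (\<lambda>b. p + int b) {1..k}" by (auto simp: inj_on_def)
      show "(\<lambda>b. p + int b) ` {1..k} \<subseteq> {p - 1..0}" by (auto simp: p_def q_def)
      fix x assume x: "x \<in> {p-1..0}" "x \<notin> (\<lambda>b. p + int b) ` {1..k}"
      show "cp (R x q) (\<alpha> p x) = 0"
      proof (cases "p < x \<and> x \<le> q")
        case True
        then have "x = p + int (nat (x - p))" "nat (x - p) \<in> {1..k}" by (auto simp: p_def q_def)
        then show ?thesis using x(2) by blast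
      next
        case False
        show ?thesis
        proof (cases "x \<le> p")
          case True then have "\<alpha> p x = 0" by (simp add: alpha_eq)
          then show ?thesis by (simp add: cp_0_r[OF ty_R])
        next
          case F2: False
          then have "R x q = 0" using False by (simp add: R_eq)
          then show ?thesis by (simp add: cp_0_l[OF ty_alpha])
        qed
      qed
    qed simp
    also have "\<dots> = (\<Sum>b\<in>{1..k}. neg1 (int r * int b + int k * int b + int k) (X b) + neg1 ((int k - int b) * (int b + 1)) (Y3 b))"
      by (rule sum.cong[OF refl]) (auto simp: p_def q_def X_def Y3_def term3)
    finally show ?thesis .
  qed
  have RHS: "T (Dc k) (I r) = T (df (hr (k+1))) (I r) + (\<Sum>a\<in>{1..k}. neg1 (int a) (Y2 a))
       + (\<Sum>b\<in>{1..k}. neg1 ((int k - int b) * (int b + 1)) (Y3 b))"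
  proof -
    have t1: "ty (df (hr (k+1))) (k+1) 1 (- int k)" by (rule ty_dif[OF th]) auto
    have t2: "ty (\<Sum>a\<in>{1..k}. neg1 (int a) (cp (m (a+1)) (T (hr (k-a+1)) (I a)))) (k+1) 1 (- int k)"
      by (intro ty_sum ty_neg1 ty_Dc1) auto
    have t3: "ty (\<Sum>b\<in>{1..k}. neg1 ((int k - int b) * (int b + 1)) (cp (hr (k-b+1)) (Q (k-b+1) b))) (k+1) 1 (- int k)"
      by (intro ty_sum ty_neg1 ty_Dc2) auto
    have s2: "T (\<Sum>a\<in>{1..k}. neg1 (int a) (cp (m (a+1)) (T (hr (k-a+1)) (I a)))) (I r)
        = (\<Sum>a\<in>{1..k}. neg1 (int a) (Y2 a))"
    proof -
      have "T (\<Sum>a\<in>{1..k}. neg1 (int a) (cp (m (a+1)) (T (hr (k-a+1)) (I a)))) (I r)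
          = (\<Sum>a\<in>{1..k}. T (neg1 (int a) (cp (m (a+1)) (T (hr (k-a+1)) (I a)))) (I r))"
        by (rule T_sum_l[OF _ tyI0]) (rule ty_neg1, rule ty_Dc1, auto)
      also have "\<dots> = (\<Sum>a\<in>{1..k}. neg1 (int a) (Y2 a))"
        unfolding Y2_def by (rule sum.cong[OF refl], rule T_neg1_l[OF ty_Dc1 tyI0]) auto
      finally show ?thesis .
    qed
    have s3: "T (\<Sum>b\<in>{1..k}. neg1 ((int k - int b) * (int b + 1)) (cp (hr (k-b+1)) (Q (k-b+1) b))) (I r)
        = (\<Sum>b\<in>{1..k}. neg1 ((int k - int b) * (int b + 1)) (Y3 b))"
    proof -
      have "T (\<Sum>b\<in>{1..k}. neg1 ((int k - int b) * (int b + 1)) (cp (hr (k-b+1)) (Q (k-b+1) b))) (I r)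
          = (\<Sum>b\<in>{1..k}. T (neg1 ((int k - int b) * (int b + 1)) (cp (hr (k-b+1)) (Q (k-b+1) b))) (I r))"
        by (rule T_sum_l[OF _ tyI0]) (rule ty_neg1, rule ty_Dc2, auto)
      also have "\<dots> = (\<Sum>b\<in>{1..k}. neg1 ((int k - int b) * (int b + 1)) (Y3 b))"
        unfolding Y3_def by (rule sum.cong[OF refl], rule T_neg1_l[OF ty_Dc2 tyI0]) auto
      finally show ?thesis .
    qed
    show ?thesis unfolding Dc_def
      by (simp only: T_add_l[OF ty_add[OF t1 t2] t3 tyI0] T_add_l[OF t1 t2 tyI0] s2 s3)
  qed
  have canc: "neg1 (int r * int a + int k * int a + int k + 1) (X a) + neg1 (int r * int a + int k * int a + int k) (X a) = 0" for a
    by (simp add: neg1_def)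
  have comb: "(\<Sum>a\<in>{1..k}. neg1 (int r * int a + int k * int a + int k + 1) (X a) + neg1 (int a) (Y2 a))
      + (\<Sum>b\<in>{1..k}. neg1 (int r * int b + int k * int b + int k) (X b) + neg1 ((int k - int b) * (int b + 1)) (Y3 b))
      = (\<Sum>a\<in>{1..k}. neg1 (int a) (Y2 a)) + (\<Sum>b\<in>{1..k}. neg1 ((int k - int b) * (int b + 1)) (Y3 b))"
    unfolding sum.distrib[symmetric] by (rule sum.cong[OF refl]) (auto simp: neg1_def)
  have "tw_d C \<alpha> \<alpha> (-1) R p q = T (Dc k) (I r)"
    unfolding twd_sum[OF good_R] P1 P2 P3 RHS
    using comb by (simp add: algebra_simps)
  then show ?thesis by (simp add: p_def q_def)
qed

lemma sum_single:
  assumes "finite SS" "x \<in> SS" "\<And>y. y \<in> SS \<Longrightarrow> y \<noteq> x \<Longrightarrow> g y = 0"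
  shows "sum g SS = g x"
proof -
  have "sum g SS = sum g {x}"
    by (rule sum.mono_neutral_right) (use assms in auto)
  then show ?thesis by simp
qed

lemma df_Sm: "df (Sm p q) = 0"
proof -
  have d: "df (T \<eta> (I n)) = 0" for n
    using dif_T[OF tye tyI0[of n]] de T_0_l[OF tyI0[of n]] T_0_r[OF tye] by simp
  have t: "ty (T \<eta> (I n)) n (1+n) 0" for n by (rule ty_T[OF tye tyI0]) auto
  have "df (neg1 p' (T \<eta> (I n))) = 0" for p' n using dif_neg1[OF t[of n]] d[of n] by simp
  then show ?thesis unfolding Sm_def by simp
qed

lemma twdS:
  assumes k1: "1 \<le> k"
  shows "tw_d C \<alpha> \<alpha> (-1) Sm (- int r - int k + 1) (- int r) =
     neg1 (int k + 1) (T (cp (m (k+1)) (T \<eta> (I k))) (I r))"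
proof -
  define p where "p = - int r - int k + 1"
  define q where "q = - int r"
  have tQ: "ty (Q r k) (r+k) r (1 - int k)" by (rule tyQ[OF k1])
  have tm: "ty (m (k+1)) (k+1) 1 (1 - int k)" by (rule tym1[OF k1])
  have tE: "ty (T \<eta> (I (r+k))) (r+k) (r+k+1) 0" by (rule ty_T[OF tye tyI0]) auto
  have tEk: "ty (T \<eta> (I k)) k (k+1) 0" by (rule ty_T[OF tye tyI0]) auto
  have tQ1: "ty (Q (r+1) k) (r+k+1) (r+1) (1 - int k)" by (rule tyQI[OF k1]) auto
  have tX: "ty (T (I 1) (Q r k)) (r+k+1) (r+1) (1 - int k)" by (rule ty_T[OF tyI0 tQ]) auto
  have tY0: "ty (T (m (k+1)) (I r)) (r+k+1) (r+1) (1 - int k)" by (rule ty_T[OF tm tyI0]) auto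
  have tY: "ty (neg1 (int (r*k)) (T (m (k+1)) (I r))) (r+k+1) (r+1) (1 - int k)" by (rule ty_neg1[OF tY0])
  have Qs: "Q (r+1) k = T (I 1) (Q r k) + neg1 (int (r*k)) (T (m (k+1)) (I r))"
    using Q_split[OF k1, of 1 r] Q1[OF k1] by simp
  have S1: "(\<Sum>x\<in>{p-1..0}. cp (\<alpha> x q) (Sm p x)) =
      neg1 (int r * int k + int k + 1) (T \<eta> (Q r k)) + neg1 (int k + 1) (T (cp (m (k+1)) (T \<eta> (I k))) (I r))"
  proof -
    have "(\<Sum>x\<in>{p-1..0}. cp (\<alpha> x q) (Sm p x)) = cp (\<alpha> (p-1) q) (Sm p (p-1))"
    proof (rule sum_single)
      fix y assume "y \<in> {p-1..0}" "y \<noteq> p - 1"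
      then have "Sm p y = 0" by (simp add: Sm_def)
      then show "cp (\<alpha> y q) (Sm p y) = 0" by (simp add: cp_0_r[OF ty_alpha])
    qed (auto simp: p_def)
    also have "\<alpha> (p-1) q = neg1 (int r * (int k + 1)) (Q (r+1) k)"
      using alpha_rk[OF k1, of r] by (simp add: p_def q_def)
    also have "Sm p (p-1) = neg1 p (T \<eta> (I (r+k)))"
    proof -
      have "nat (1 - p) = r + k" using k1 by (simp add: p_def)
      then show ?thesis using k1 by (simp add: Sm_def p_def)
    qed
    also have "cp (neg1 (int r * (int k + 1)) (Q (r+1) k)) (neg1 p (T \<eta> (I (r+k))))
        = neg1 (int r * (int k + 1)) (neg1 p (cp (Q (r+1) k) (T \<eta> (I (r+k)))))"
      unfolding cp_neg1_l[OF tQ1 ty_neg1[OF tE]] cp_neg1_r[OF tQ1 tE] ..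
    also have "cp (Q (r+1) k) (T \<eta> (I (r+k))) = cp (T (I 1) (Q r k)) (T \<eta> (I (r+k)))
        + cp (neg1 (int (r*k)) (T (m (k+1)) (I r))) (T \<eta> (I (r+k)))"
      unfolding Qs by (rule cp_add_l[OF tX tY tE])
    also have "cp (T (I 1) (Q r k)) (T \<eta> (I (r+k))) = T \<eta> (Q r k)"
      using inter[OF tyI0 tQ tye tyI0] cp_I(1)[OF tye] cp_I(2)[OF tQ] by simp
    also have "cp (neg1 (int (r*k)) (T (m (k+1)) (I r))) (T \<eta> (I (r+k)))
        = neg1 (int (r*k)) (T (cp (m (k+1)) (T \<eta> (I k))) (I r))"
    proof -
      have "T \<eta> (I (r+k)) = T (T \<eta> (I k)) (I r)"
        using T_assoc[OF tye tyI0 tyI0] by (simp add: I_add add.commute)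
      moreover have "cp (T (m (k+1)) (I r)) (T (T \<eta> (I k)) (I r)) = T (cp (m (k+1)) (T \<eta> (I k))) (I r)"
        using inter[OF tm tyI0 tEk tyI0] cp_I(1)[OF tyI0[of r]] by simp
      ultimately show ?thesis unfolding cp_neg1_l[OF tY0 tE] by (simp only:)
    qed
    finally have "(\<Sum>x\<in>{p-1..0}. cp (\<alpha> x q) (Sm p x)) =
        neg1 (int r * (int k + 1) + p) (T \<eta> (Q r k))
        + neg1 (int r * (int k + 1) + p + int (r*k)) (T (cp (m (k+1)) (T \<eta> (I k))) (I r))"
      by (simp add: algebra_simps)
    also have "\<dots> = neg1 (int r * int k + int k + 1) (T \<eta> (Q r k)) + neg1 (int k + 1) (T (cp (m (k+1)) (T \<eta> (I k))) (I r))"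
      by (intro arg_cong2[where f="(+)"] neg1_eqI) (auto simp: p_def algebra_simps)
    finally show ?thesis .
  qed
  have S2: "(\<Sum>x\<in>{p-1..0}. cp (Sm x q) (\<alpha> p x)) = neg1 (int r * int k + int k) (T \<eta> (Q r k))"
  proof (cases "r = 0")
    case True
    have "(\<Sum>x\<in>{p-1..0}. cp (Sm x q) (\<alpha> p x)) = 0"
    proof (rule sum.neutral, rule ballI)
      fix x assume "x \<in> {p-1..0}"
      then have "Sm x q = 0" using True by (auto simp: Sm_def q_def)
      then show "cp (Sm x q) (\<alpha> p x) = 0" by (simp add: cp_0_l[OF ty_alpha])
    qed
    then show ?thesis using True T_0_r[OF tye] by simp
  next
    case False
    have "(\<Sum>x\<in>{p-1..0}. cp (Sm x q) (\<alpha> p x)) = cp (Sm (q+1) q) (\<alpha> p (q+1))"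
    proof (rule sum_single)
      fix y assume "y \<in> {p-1..0}" "y \<noteq> q + 1"
      then have "Sm y q = 0" by (auto simp: Sm_def)
      then show "cp (Sm y q) (\<alpha> p y) = 0" by (simp add: cp_0_l[OF ty_alpha])
    qed (use False k1 in \<open>auto simp: p_def q_def\<close>)
    also have "\<alpha> p (q+1) = neg1 (int (r-1) * (int k + 1)) (Q r k)"
    proof -
      have e1: "- int (r-1) - int k = p" using False by (simp add: p_def of_nat_diff)
      have e2: "- int (r-1) = q + 1" using False by (simp add: q_def of_nat_diff)
      show ?thesis using alpha_rk[OF k1, of "r-1", unfolded e1, unfolded e2] False by simp
    qed
    also have "Sm (q+1) q = neg1 (1 - int r) (T \<eta> (I r))"
      using False by (simp add: Sm_def q_def)
    also have "cp (neg1 (1 - int r) (T \<eta> (I r))) (neg1 (int (r-1) * (int k + 1)) (Q r k))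
        = neg1 (1 - int r) (neg1 (int (r-1) * (int k + 1)) (cp (T \<eta> (I r)) (Q r k)))"
    proof -
      have t: "ty (T \<eta> (I r)) r (r+1) 0" by (rule ty_T[OF tye tyI0]) auto
      show ?thesis unfolding cp_neg1_l[OF t ty_neg1[OF tQ]] cp_neg1_r[OF t tQ] ..
    qed
    also have "cp (T \<eta> (I r)) (Q r k) = T \<eta> (Q r k)"
      using inter[OF tye tyI0 tyI0 tQ] cp_I(2)[OF tye] cp_I(1)[OF tQ] T_I0(1)[OF tQ] by simp
    finally show ?thesis using False
      by (simp only: neg1_simps) (rule neg1_eqI, auto simp: of_nat_diff algebra_simps)
  qed
  have "tw_d C \<alpha> \<alpha> (-1) Sm p q = neg1 (int k + 1) (T (cp (m (k+1)) (T \<eta> (I k))) (I r))"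
    unfolding twd_sum[OF good_Sm] df_Sm S1 S2 by (simp add: neg1_def)
  then show ?thesis by (simp add: p_def q_def)
qed

lemma twdS0: "q < p \<or> 0 < q \<Longrightarrow> tw_d C \<alpha> \<alpha> (-1) Sm p q = 0"
proof -
  assume a: "q < p \<or> 0 < q"
  have 1: "(\<Sum>x\<in>{p-1..0}. cp (\<alpha> x q) (Sm p x)) = 0"
  proof (rule sum.neutral, rule ballI)
    fix x assume "x \<in> {p-1..0}"
    show "cp (\<alpha> x q) (Sm p x) = 0"
    proof (cases "Sm p x = 0")
      case True then show ?thesis by (simp add: cp_0_r[OF ty_alpha])
    next
      case False
      then have "x = p - 1" by (auto simp: Sm_def split: if_splits)
      then have "\<alpha> x q = 0" using a by (auto simp: alpha_eq)
      then show ?thesis by (simp add: cp_0_l[OF ty_Sm])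
    qed
  qed
  have 2: "(\<Sum>x\<in>{p-1..0}. cp (Sm x q) (\<alpha> p x)) = 0"
  proof (rule sum.neutral, rule ballI)
    fix x assume "x \<in> {p-1..0}"
    show "cp (Sm x q) (\<alpha> p x) = 0"
    proof (cases "Sm x q = 0")
      case True then show ?thesis by (simp add: cp_0_l[OF ty_alpha])
    next
      case False
      then have "q = x - 1" "x \<le> 0" by (auto simp: Sm_def split: if_splits)
      then have "\<alpha> p x = 0" using a by (auto simp: alpha_eq)
      then show ?thesis by (simp add: cp_0_r[OF ty_Sm])
    qed
  qed
  show ?thesis unfolding twd_sum[OF good_Sm] df_Sm 1 2 by simp
qed

lemma twdR0: "q < p \<or> 0 < q \<Longrightarrow> tw_d C \<alpha> \<alpha> (-1) R p q = 0"
proof -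
  assume a: "q < p \<or> 0 < q"
  have 0: "R p q = 0" using a by (auto simp: R_eq)
  have 1: "(\<Sum>x\<in>{p-1..0}. cp (\<alpha> x q) (R p x)) = 0"
  proof (rule sum.neutral, rule ballI)
    fix x assume "x \<in> {p-1..0}"
    show "cp (\<alpha> x q) (R p x) = 0"
    proof (cases "R p x = 0")
      case True then show ?thesis by (simp add: cp_0_r[OF ty_alpha])
    next
      case False
      then have "p \<le> x" by (auto simp: R_eq split: if_splits)
      then have "\<alpha> x q = 0" using a by (auto simp: alpha_eq)
      then show ?thesis by (simp add: cp_0_l[OF ty_R])
    qed
  qed
  have 2: "(\<Sum>x\<in>{p-1..0}. cp (R x q) (\<alpha> p x)) = 0"
  proof (rule sum.neutral, rule ballI)
    fix x assume "x \<in> {p-1..0}"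
    show "cp (R x q) (\<alpha> p x) = 0"
    proof (cases "R x q = 0")
      case True then show ?thesis by (simp add: cp_0_l[OF ty_alpha])
    next
      case False
      then have "x \<le> q" "q \<le> 0" by (auto simp: R_eq split: if_splits)
      then have "\<alpha> p x = 0" using a by (auto simp: alpha_eq)
      then show ?thesis by (simp add: cp_0_r[OF ty_R])
    qed
  qed
  show ?thesis unfolding twd_sum[OF good_R] 0 1 2 by simp
qed

definition H where "H = (\<lambda>p q. Sm p q - R p q)"

lemma ty_cmE: "ty (cp (m (k+1)) (T \<eta> (I k))) k 1 (1 - int k)" if "1 \<le> k"
  by (rule ty_cmp[OF tym1[OF that] ty_T[OF tye tyI0]]) auto

lemma main_eq:
  assumes hyp: "\<And>i. 1 \<le> i \<Longrightarrow> neg1 (int i - 1) (cp (m (i+1)) (T \<eta> (I i))) = (if i = 1 then I 1 else 0) + Dc (i-1)"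
  shows "tw_d C \<alpha> \<alpha> (-1) H = tw_id C {p. p \<le> 0} (bar_obj C A)"
proof (intro ext)
  fix p q
  show "tw_d C \<alpha> \<alpha> (-1) H p q = tw_id C {p. p \<le> 0} (bar_obj C A) p q"
  proof (cases "q < p \<or> 0 < q")
    case True
    then show ?thesis unfolding H_def twd_diff[OF good_Sm good_R] twdS0[OF True] twdR0[OF True]
      by (auto simp: tw_id_def)
  next
    case False
    define r where "r = nat (- q)"
    define k where "k = nat (q - p + 1)"
    have k1: "1 \<le> k" and r0: "q = - int r" and p0: "p = - int r - int k + 1"
      using False by (auto simp: r_def k_def)
    have eS: "tw_d C \<alpha> \<alpha> (-1) Sm p q = neg1 (int k + 1) (T (cp (m (k+1)) (T \<eta> (I k))) (I r))"
      unfolding p0 r0 by (rule twdS[OF k1])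
    have eR: "tw_d C \<alpha> \<alpha> (-1) R p q = T (Dc (k-1)) (I r)"
    proof -
      have "p = - int r - int (k-1)" using k1 by (simp add: p0 of_nat_diff)
      then show ?thesis unfolding r0 using twdR[of r "k-1"] by simp
    qed
    define Z where "Z = (if k = 1 then I 1 else 0) + Dc (k-1)"
    have tZ: "ty Z k 1 (1 - int k)"
    proof -
      have "ty (Dc (k-1)) k 1 (1 - int k)"
        using ty_Dc[of "k-1"] k1 by (simp add: of_nat_diff)
      moreover have "ty (if k = 1 then I 1 else 0) k 1 (1 - int k)" by (auto intro: tyI0)
      ultimately show ?thesis unfolding Z_def by (metis ty_add)
    qed
    have c: "cp (m (k+1)) (T \<eta> (I k)) = neg1 (int k - 1) Z"
    proof -
      have dbl: "neg1 (int k - 1) (neg1 (int k - 1) (cp (m (k+1)) (T \<eta> (I k)))) = cp (m (k+1)) (T \<eta> (I k))"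
        unfolding neg1_simps by (rule neg1_even) simp
      have h: "neg1 (int k - 1) (cp (m (k+1)) (T \<eta> (I k))) = Z" using hyp[OF k1] unfolding Z_def .
      show ?thesis unfolding h[symmetric] by (rule dbl[symmetric])
    qed
    have "tw_d C \<alpha> \<alpha> (-1) H p q = neg1 (int k + 1) (T (neg1 (int k - 1) Z) (I r)) - T (Dc (k-1)) (I r)"
      unfolding H_def twd_diff[OF good_Sm good_R] eS eR c ..
    also have "neg1 (int k + 1) (T (neg1 (int k - 1) Z) (I r)) = T Z (I r)"
      unfolding T_neg1_l[OF tZ tyI0] neg1_simps by (rule neg1_even) simp
    also have "T Z (I r) - T (Dc (k-1)) (I r) = (if k = 1 then I (r+1) else 0)"
    proof (cases "k = 1")
      case True
      have t0: "ty (Dc 0) 1 1 0" using tZ True by (simp add: Z_def) (metis add_diff_cancel_left' diff_add_cancel ty_diff tyI0)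
      show ?thesis using True T_add_l[OF tyI0 t0 tyI0[of r]] by (simp add: Z_def I_add)
    next
      case F: False
      then show ?thesis by (simp add: Z_def)
    qed
    also have "\<dots> = tw_id C {p. p \<le> 0} (bar_obj C A) p q"
      using k1 by (auto simp: tw_id_def bar_obj_def idp_def p0 r0)
    finally show ?thesis .
  qed
qed

lemma ty_H: "ty (H p q) (nat (1-p)) (nat (1-q)) (-1 + p - q)"
  unfolding H_def by (rule ty_diff[OF ty_Sm ty_R])

lemma H_zero: "H p q \<noteq> 0 \<Longrightarrow> p \<le> 0 \<and> p - 1 \<le> q \<and> q \<le> 0"
  unfolding H_def by (auto simp: Sm_def R_eq split: if_splits)

lemma tw_mor_H: "tw_mor C {p. p \<le> 0} {p. p \<le> 0} (bar_obj C A) (bar_obj C A) (-1) H"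
  unfolding tw_mor_def
proof (intro conjI allI)
  fix k l
  show "if k \<in> {p. p \<le> 0} \<and> l \<in> {p. p \<le> 0} then H k l \<in> hom C (bar_obj C A k) (bar_obj C A l) (-1 + k - l)
        else H k l = 0"
  proof (cases "k \<le> 0 \<and> l \<le> 0")
    case True then show ?thesis using ty_H[of k l] by (simp add: ty_def bar_obj_def)
  next
    case False then show ?thesis using H_zero[of k l] by auto
  qed
next
  fix k
  show "finite {l. H k l \<noteq> 0}"
    by (rule finite_subset[of _ "{k-1..0}"]) (use H_zero in auto)
qed

lemma Q_last: "1 \<le> k \<Longrightarrow> Q (Suc i) k = (\<Sum>j<i. neg1 (int (j*k)) (T (T (ident C A) (I (Suc i - j - 2))) (T (m (k+1)) (I j))))
    + neg1 (int (i*k)) (T (m (k+1)) (I i))"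
proof -
  assume k: "1 \<le> k"
  have t: "ty (T (m (k+1)) (I i)) (k+1+i) (1+i) (1 - int k)" by (rule ty_T[OF tym1[OF k] tyI0]) auto
  have "(\<Sum>j<i. neg1 (int (j*k)) (T (I (Suc i - j - 1)) (T (m (k+1)) (I j))))
      = (\<Sum>j<i. neg1 (int (j*k)) (T (T (ident C A) (I (Suc i - j - 2))) (T (m (k+1)) (I j))))"
  proof (rule sum.cong[OF refl])
    fix j assume "j \<in> {..<i}"
    then have "I (Suc i - j - 1) = T (ident C A) (I (Suc i - j - 2))"
      using I_Suc[of "i - j - 1"] by (simp add: I1 Suc_diff_Suc)
    then show "neg1 (int (j*k)) (T (I (Suc i - j - 1)) (T (m (k+1)) (I j)))
      = neg1 (int (j*k)) (T (T (ident C A) (I (Suc i - j - 2))) (T (m (k+1)) (I j)))" by simp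
  qed
  then show ?thesis unfolding Q_def using T_I0(1)[OF t] by simp
qed

lemma rmod_bar_eq: "rmod_bar C A m A m = \<alpha>"
proof (intro ext)
  fix p q
  show "rmod_bar C A m A m p q = \<alpha> p q"
  proof (cases "p < q \<and> q \<le> 0")
    case True
    define i where "i = nat (1 - q) - 1"
    have i: "nat (1 - q) = Suc i" using True by (simp add: i_def)
    have k: "1 \<le> nat (q - p)" using True by arith
    show ?thesis using True unfolding rmod_bar_def bar_alg_def Let_def i Q_alt Q_last[OF k] by simp
  qed (auto simp: rmod_bar_def bar_alg_def)
qed

lemma rmod_dif_eq: "1 \<le> i \<Longrightarrow> rmod_dif C A m A m A m (-1) hr i = Dc (i-1)"
proof -
  assume i: "1 \<le> i"
  have "rmod_dif C A m A m A m (-1) hr i = tw_d C \<alpha> \<alpha> (-1) R (1 - int i) 0"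
    using i by (simp add: rmod_dif_def rmod_bar_eq)
  also have "1 - int i = - int 0 - int (i-1)" using i by (simp add: of_nat_diff)
  also have "tw_d C \<alpha> \<alpha> (-1) R (- int 0 - int (i-1)) 0 = T (Dc (i-1)) (I 0)"
    using twdR[of 0 "i-1"] by simp
  also have "\<dots> = Dc (i-1)" by (rule T_I0(2)[OF ty_Dc])
  finally show ?thesis .
qed

lemma rmod_cmp_eq: "1 \<le> i \<Longrightarrow> rmod_cmp C A 0 (rmu2 m) 0 (reta C A \<eta>) i = neg1 (int i - 1) (cp (m (i+1)) (T \<eta> (I i)))"
proof -
  assume i: "1 \<le> i"
  define F where "F = rbar C A 0 (rmu2 m)"
  define G where "G = rbar C A 0 (reta C A \<eta>)"
  have tF: "ty (F x 0) (nat (2 - x)) 1 x" for x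
  proof (cases "x \<le> 0")
    case True
    have "F x 0 = neg1 (int (nat (- x))) (m (nat (- x) + 2))"
    proof -
      have t: "ty (m (nat (- x) + 2)) (nat (-x) + 2) 1 (- int (nat (-x)))" by (rule tymI) auto
      have "F x 0 = T (rmu2 m (nat (- x) + 1)) (I 0)" using True by (simp add: F_def rbar_def)
      also have "\<dots> = rmu2 m (nat (- x) + 1)"
      proof -
        have e: "rmu2 m (nat (- x) + 1) = neg1 (int (nat (- x))) (m (nat (- x) + 2))"
          by (simp add: rmu2_def)
        show ?thesis unfolding e by (rule T_I0(2)[OF ty_neg1[OF t]])
      qed
      finally show ?thesis by (simp add: rmu2_def)
    qed
    moreover have "ty (m (nat (- x) + 2)) (nat (2 - x)) 1 x" by (rule tymI) (use True in auto)
    ultimately show ?thesis by simp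
  next
    case False then show ?thesis by (simp add: F_def rbar_def)
  qed
  have "rmod_cmp C A 0 (rmu2 m) 0 (reta C A \<eta>) i = fsum (\<lambda>x. cp (F x 0) (G (1 - int i) x))"
    using i by (simp add: rmod_cmp_def tw_comp_def F_def G_def)
  also have "\<dots> = (\<Sum>x\<in>{1 - int i}. cp (F x 0) (G (1 - int i) x))"
  proof (rule fsum_eq_sum)
    fix x assume "x \<notin> {1 - int i}"
    then have "G (1 - int i) x = 0" by (auto simp: G_def rbar_def reta_def Let_def T_0_l[OF tyI0])
    then show "cp (F x 0) (G (1 - int i) x) = 0" by (simp add: cp_0_r[OF tF])
  qed simp
  also have "\<dots> = cp (F (1 - int i) 0) (G (1 - int i) (1 - int i))" by simp
  also have "F (1 - int i) 0 = neg1 (int i - 1) (m (i+1))"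
  proof -
    have t: "ty (m (i+1)) (i+1) 1 (1 - int i)" by (rule tymI) (use i in auto)
    have "F (1 - int i) 0 = T (rmu2 m i) (I 0)" using i by (simp add: F_def rbar_def nat_diff_distrib)
    also have "\<dots> = rmu2 m i"
    proof -
      have e: "rmu2 m i = neg1 (int i - 1) (m (i+1))" using i by (simp add: rmu2_def)
      show ?thesis unfolding e by (rule T_I0(2)[OF ty_neg1[OF t]])
    qed
    finally show ?thesis using i by (simp add: rmu2_def)
  qed
  also have "G (1 - int i) (1 - int i) = T \<eta> (I i)"
  proof -
    have "G (1 - int i) (1 - int i) = T (T \<eta> (ident C A)) (I (i - 1))"
      using i by (simp add: G_def rbar_def reta_def)
    also have "\<dots> = T \<eta> (T (I 1) (I (i - 1)))" unfolding I1 by (rule T_assoc[OF tye tyI0 tyI0])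
    also have "T (I 1) (I (i - 1)) = I i" using i by (simp add: I_add)
    finally show ?thesis .
  qed
  also have "cp (neg1 (int i - 1) (m (i+1))) (T \<eta> (I i)) = neg1 (int i - 1) (cp (m (i+1)) (T \<eta> (I i)))"
  proof -
    have t: "ty (m (i+1)) (i+1) 1 (1 - int i)" by (rule tymI) (use i in auto)
    have t2: "ty (T \<eta> (I i)) i (i+1) 0" by (rule ty_T[OF tye tyI0]) auto
    show ?thesis by (rule cp_neg1_l[OF t t2])
  qed
  finally show ?thesis .
qed

end

theorem lemma4p4:
  fixes C :: "('o, 'm::ab_group_add) mdg" and A :: 'o and m :: "nat \<Rightarrow> 'm"
  assumes "monoidal_dg C"
    and "ainf_alg C A m"
    and "strongly_homotopy_unital C A m"
  shows "tw_null_homotopic C {p. p \<le> 0} (bar_obj C A) (bar_alg C A m)"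
proof -
  from assms(3) obtain \<eta> hr hl where eh: "\<eta> \<in> hom C (tunit C) A 0" "dif C \<eta> = 0"
      "rmod_mor C A A A (-1) hr"
    and eqr: "rmod_cmp C A 0 (rmu2 m) 0 (reta C A \<eta>) = (\<lambda>i. mod_id C A i + rmod_dif C A m A m A m (-1) hr i)"
    unfolding strongly_homotopy_unital_def by blast
  interpret L C A by unfold_locales (rule assms(1))
  interpret S C A m hr \<eta>
  proof unfold_locales
    fix i :: nat assume "2 \<le> i"
    then show "ty (m i) i 1 (2 - int i)"
      using assms(2) unfolding ainf_alg_def ty_def by (simp add: opow_1 ax_tunit)
  next
    fix i :: nat assume i: "1 \<le> i"
    have e: "tens C A (opow C A (i - 1)) = opow C A i" using i by (cases i) auto
    have h: "hr i \<in> hom C (tens C A (opow C A (i - 1))) A (-1 - int i + 1)"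
      using eh(3) i unfolding rmod_mor_def by blast
    show "ty (hr i) i 1 (- int i)"
      unfolding ty_def opow_1 using h unfolding e by simp
  next
    show "ty \<eta> 0 1 0" using eh(1) unfolding ty_def by (simp add: opow_1 ax_tunit)
  next
    show "dif C \<eta> = 0" by (rule eh(2))
  qed
  have hyp: "neg1 (int i - 1) (cmp C (m (i+1)) (tensm C \<eta> (idp C A i))) = (if i = 1 then idp C A 1 else 0) + Dc (i-1)"
    if i: "1 \<le> i" for i
  proof -
    have "rmod_cmp C A 0 (rmu2 m) 0 (reta C A \<eta>) i = mod_id C A i + rmod_dif C A m A m A m (-1) hr i"
      using fun_cong[OF eqr, of i] by simp
    then show ?thesis using i by (simp add: rmod_cmp_eq rmod_dif_eq mod_id_def I1)
  qed
  show ?thesis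
    unfolding tw_null_homotopic_def using tw_mor_H main_eq[OF hyp] by blast
qed


end
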